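(* Let $A$ be an associative algebra over a field $F$ with $\mathrm{char}(F)\neq 2,3$. If a linear map $T:A\to A$ satisfies $T(x)^3-x^3\in[A,A]$ for every $x\in A$, then $T(x)^2T(y)-x^2y\in[A,A]$ for all $x,y\in A$. Moreover, if $A$ is finite-dimensional and $\ker T\cap\mathrm{rad}(A)=\{0\}$, then $T$ is bijective and $T(M)\subseteq M$ for every maximal ideal $M$ of $A$.
   Context: $[A,A]$ denotes the linear span of all commutators $xy-yx$, $x,y\in A$. For finite-dimensional $A$, $\mathrm{rad}(A)$ is the radical of $A$, i.e. the unique maximal nilpotent ideal (equivalently, the intersection of all maximal ideals). *)

theory Defs
  imports Complex_Main
begin

definition algebra_over :: "('f::field \<Rightarrow> 'a::ring_1 \<Rightarrow> 'a) \<Rightarrow> bool" where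
  "algebra_over scale \<longleftrightarrow> Vector_Spaces.vector_space scale \<and>
     (\<forall>c x y. scale c (x * y) = scale c x * y \<and> scale c (x * y) = x * scale c y)"

definition comm_span :: "('f::field \<Rightarrow> 'a::ring_1 \<Rightarrow> 'a) \<Rightarrow> 'a set" where
  "comm_span scale = module.span scale {x * y - y * x | x y. True}"

definition fin_dim_alg :: "('f::field \<Rightarrow> 'a::ring_1 \<Rightarrow> 'a) \<Rightarrow> bool" where
  "fin_dim_alg scale \<longleftrightarrow> (\<exists>B. finite B \<and> module.span scale B = UNIV)"

definition alg_ideal :: "('f::field \<Rightarrow> 'a::ring_1 \<Rightarrow> 'a) \<Rightarrow> 'a set \<Rightarrow> bool" where
  "alg_ideal scale I \<longleftrightarrow> module.subspace scale I \<and>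
     (\<forall>a x. x \<in> I \<longrightarrow> a * x \<in> I \<and> x * a \<in> I)"

definition maximal_alg_ideal :: "('f::field \<Rightarrow> 'a::ring_1 \<Rightarrow> 'a) \<Rightarrow> 'a set \<Rightarrow> bool" where
  "maximal_alg_ideal scale M \<longleftrightarrow> alg_ideal scale M \<and> M \<noteq> UNIV \<and>
     (\<forall>J. alg_ideal scale J \<and> M \<subseteq> J \<longrightarrow> J = M \<or> J = UNIV)"

definition nilpotent_ideal :: "('f::field \<Rightarrow> 'a::ring_1 \<Rightarrow> 'a) \<Rightarrow> 'a set \<Rightarrow> bool" where
  "nilpotent_ideal scale I \<longleftrightarrow> alg_ideal scale I \<and>
     (\<exists>n>0. \<forall>xs. length xs = n \<and> set xs \<subseteq> I \<longrightarrow> prod_list xs = 0)"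

definition alg_rad :: "('f::field \<Rightarrow> 'a::ring_1 \<Rightarrow> 'a) \<Rightarrow> 'a set" where
  "alg_rad scale = (THE R. nilpotent_ideal scale R \<and>
     (\<forall>I. nilpotent_ideal scale I \<longrightarrow> I \<subseteq> R))"

end

theory Submission
  imports Defs "HOL-Library.Function_Algebras"
begin


lemma ring_id3:
  fixes X Y x y :: "'a::ring_1"
  shows "((X+Y)^3 - (x+y)^3) - ((X-Y)^3 - (x-y)^3) - (Y^3 - y^3) - (Y^3 - y^3)
     - ((X*Y)*X - X*(X*Y)) - ((X*Y)*X - X*(X*Y)) - (Y*(X*X) - (X*X)*Y) - (Y*(X*X) - (X*X)*Y)
     + ((x*y)*x - x*(x*y)) + ((x*y)*x - x*(x*y)) + (y*(x*x) - (x*x)*y) + (y*(x*x) - (x*x)*y)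
   = (X^2*Y - x^2*y) + (X^2*Y - x^2*y) + (X^2*Y - x^2*y) + (X^2*Y - x^2*y) + (X^2*Y - x^2*y) + (X^2*Y - x^2*y)"
  by (simp add: power3_eq_cube power2_eq_square algebra_simps)

locale falg =
  fixes scale :: "'f::field \<Rightarrow> 'a::ring_1 \<Rightarrow> 'a"
  assumes alg: "algebra_over scale"
begin

sublocale vector_space scale
  using alg unfolding algebra_over_def by auto

lemma smult_left: "scale c x * y = scale c (x * y)"
  using alg unfolding algebra_over_def by auto
lemma smult_right: "x * scale c y = scale c (x * y)"
  using alg unfolding algebra_over_def by metis

abbreviation "C \<equiv> comm_span scale"

lemma C_sub: "subspace C" unfolding comm_span_def by simp
lemma comm_in_C: "x * y - y * x \<in> C"
  unfolding comm_span_def by (rule span_base) blast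

lemma div_in: assumes "(k::'f) \<noteq> 0" "subspace S" "scale k z \<in> S" shows "z \<in> S"
proof -
  have "scale (1/k) (scale k z) = z" using assms(1) by simp
  with subspace_scale[OF assms(2,3), of "1/k"] show ?thesis by simp
qed

lemma scale_of_nat: "scale (of_nat n) x = of_nat n * x"
  by (induct n) (simp_all add: scale_left_distrib distrib_right)

lemma six: assumes "(2::'f) \<noteq> 0" "(3::'f) \<noteq> 0" "subspace S"
  "z + z + z + z + z + z \<in> S" shows "z \<in> S"
proof -
  have "(6::'f) = 2*3" by simp
  hence "(6::'f) \<noteq> 0" using assms(1,2) by (metis mult_eq_0_iff)
  moreover have "scale 6 z = z + z + z + z + z + z"
  proof -
    have "(6::'a) = 1+1+1+1+1+1" by simp
    hence "(6::'a) * z = (1+1+1+1+1+1) * z" by simp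
    hence "(6::'a) * z = z + z + z + z + z + z" by (simp only: distrib_right mult_1_left)
    thus ?thesis using scale_of_nat[of 6 z] by simp
  qed
  ultimately show ?thesis using div_in assms by metis
qed

lemma part1:
  assumes char2: "(2::'f) \<noteq> 0" and char3: "(3::'f) \<noteq> 0"
    and lin: "Vector_Spaces.linear scale scale T"
    and cube: "\<forall>x. T x ^ 3 - x ^ 3 \<in> C"
  shows "T x ^ 2 * T y - x ^ 2 * y \<in> C"
proof -
  interpret T: Vector_Spaces.linear scale scale T by fact
  have a: "(T x + T y)^3 - (x+y)^3 \<in> C" using cube[rule_format, of "x+y"] by (simp add: T.add)
  have b: "(T x - T y)^3 - (x-y)^3 \<in> C" using cube[rule_format, of "x-y"] by (simp add: T.diff)
  have c: "T y^3 - y^3 \<in> C" using cube by auto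
  note s = subspace_add[OF C_sub] subspace_diff[OF C_sub]
  have k1: "(T x*T y)*T x - T x*(T x*T y) \<in> C" "(x*y)*x - x*(x*y) \<in> C"
    "T y*(T x*T x) - (T x*T x)*T y \<in> C" "y*(x*x) - (x*x)*y \<in> C" by (rule comm_in_C)+
  have "((T x+T y)^3 - (x+y)^3) - ((T x-T y)^3 - (x-y)^3) - (T y^3 - y^3) - (T y^3 - y^3)
     - ((T x*T y)*T x - T x*(T x*T y)) - ((T x*T y)*T x - T x*(T x*T y)) - (T y*(T x*T x) - (T x*T x)*T y) - (T y*(T x*T x) - (T x*T x)*T y)
     + ((x*y)*x - x*(x*y)) + ((x*y)*x - x*(x*y)) + (y*(x*x) - (x*x)*y) + (y*(x*x) - (x*x)*y) \<in> C"
    using a b c k1 by (metis s)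
  then show ?thesis
    unfolding ring_id3 by (rule six[OF char2 char3 C_sub])
qed

end



lemma sum_fun_apply: "(sum f A) x = sum (\<lambda>a. f a x) A"
  by (induct A rule: infinite_finite_induct) auto

locale irrep = falg scale for scale :: "'f::field \<Rightarrow> 'a::ring_1 \<Rightarrow> 'a" +
  fixes P :: "'a \<Rightarrow> 'a" and W :: "'a set"
  assumes Padd: "P (x + y) = P x + P y"
    and Pscale: "P (scale c x) = scale c (P x)"
    and PW: "P x \<in> W"
    and Pid: "w \<in> W \<Longrightarrow> P w = w"
    and Pcomp: "w \<in> W \<Longrightarrow> P (a * P (b * w)) = P (a * b * w)"
    and Ptrans: "u \<in> W \<Longrightarrow> u \<noteq> 0 \<Longrightarrow> w \<in> W \<Longrightarrow> \<exists>a. P (a * u) = w"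
    and Wnz: "W \<noteq> {0}"
    and fin: "fin_dim_alg scale"
begin

definition lin :: "('a \<Rightarrow> 'a) \<Rightarrow> bool" where
  "lin f \<longleftrightarrow> (\<forall>x y. f (x + y) = f x + f y) \<and> (\<forall>c x. f (scale c x) = scale c (f x))"

lemma lin_add: "lin f \<Longrightarrow> f (x + y) = f x + f y" by (simp add: lin_def)
lemma lin_scale: "lin f \<Longrightarrow> f (scale c x) = scale c (f x)" by (simp add: lin_def)
lemma lin_0: "lin f \<Longrightarrow> f 0 = 0"
  using lin_add[of f 0 0] by simp
lemma lin_neg: "lin f \<Longrightarrow> f (- x) = - f x"
proof -
  assume a: "lin f"
  have "f x + f (-x) = 0" using lin_add[OF a, of x "-x"] lin_0[OF a] by simp
  thus ?thesis by (metis neg_eq_iff_add_eq_0)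
qed
lemma lin_diff: "lin f \<Longrightarrow> f (x - y) = f x - f y"
  using lin_add[of f x "-y"] lin_neg[of f y] by simp
lemma lin_sum: "lin f \<Longrightarrow> f (sum g A) = sum (\<lambda>a. f (g a)) A"
  by (induct A rule: infinite_finite_induct) (auto simp: lin_0 lin_add)
lemma lin_sum_list: "lin f \<Longrightarrow> f (sum_list (map g xs)) = sum_list (map (\<lambda>a. f (g a)) xs)"
  by (induct xs) (auto simp: lin_0 lin_add)

lemma lin_P: "lin P" by (simp add: lin_def Padd Pscale)
lemma P0: "P 0 = 0" using lin_0[OF lin_P] .
lemma PP: "P (P x) = P x" using Pid[OF PW] .

definition Dset :: "('a \<Rightarrow> 'a) set" where
  "Dset = {f. lin f \<and> (\<forall>x. f x = f (P x)) \<and> (\<forall>x. f x \<in> W) \<and>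
      (\<forall>a. \<forall>w\<in>W. f (P (a * w)) = P (a * f w))}"

lemma DsetD:
  assumes "f \<in> Dset"
  shows "lin f" "f x = f (P x)" "f x \<in> W" "w \<in> W \<Longrightarrow> f (P (a * w)) = P (a * f w)"
  using assms unfolding Dset_def by auto

lemma P_Dset: "P \<in> Dset"
  unfolding Dset_def using lin_P PP PW Pid by auto

definition commset :: "('a \<Rightarrow> 'a) set \<Rightarrow> bool" where
  "commset S \<longleftrightarrow> (\<forall>f\<in>S. \<forall>g\<in>S. f \<circ> g = g \<circ> f)"

lemma maxcomm_ex: "\<exists>S. S \<subseteq> Dset \<and> commset S \<and> (\<forall>f\<in>Dset. (\<forall>g\<in>S. f \<circ> g = g \<circ> f) \<longrightarrow> f \<in> S)"
proof -
  let ?A = "{S. S \<subseteq> Dset \<and> commset S}"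
  have "\<exists>M\<in>?A. \<forall>X\<in>?A. M \<subseteq> X \<longrightarrow> X = M"
  proof (rule subset_Zorn')
    fix Ch assume ch: "subset.chain ?A Ch"
    show "\<Union>Ch \<in> ?A"
    proof -
      have "\<Union>Ch \<subseteq> Dset" using ch unfolding subset.chain_def by blast
      moreover have "commset (\<Union>Ch)"
        unfolding commset_def
      proof (intro ballI)
        fix f g assume "f \<in> \<Union>Ch" "g \<in> \<Union>Ch"
        then obtain S1 S2 where "S1 \<in> Ch" "S2 \<in> Ch" "f \<in> S1" "g \<in> S2" by auto
        have "S1 \<subseteq> S2 \<or> S2 \<subseteq> S1" using ch \<open>S1 \<in> Ch\<close> \<open>S2 \<in> Ch\<close>
          unfolding subset.chain_def by blast
        moreover have "commset S1" "commset S2" using ch \<open>S1 \<in> Ch\<close> \<open>S2 \<in> Ch\<close>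
          unfolding subset.chain_def by auto
        ultimately show "f \<circ> g = g \<circ> f" using \<open>f \<in> S1\<close> \<open>g \<in> S2\<close> unfolding commset_def by (metis subsetD)
      qed
      ultimately show ?thesis by blast
    qed
  qed
  then obtain M where M0: "M \<in> ?A" and mx0: "\<forall>X\<in>?A. M \<subseteq> X \<longrightarrow> X = M"
    by (rule bexE)
  have M: "M \<subseteq> Dset" "commset M" using M0 by simp_all
  have mx: "\<And>X. X \<in> ?A \<Longrightarrow> M \<subseteq> X \<Longrightarrow> X = M" using mx0 by blast
  have "\<forall>f\<in>Dset. (\<forall>g\<in>M. f \<circ> g = g \<circ> f) \<longrightarrow> f \<in> M"
  proof (intro ballI impI)
    fix f assume f: "f \<in> Dset" "\<forall>g\<in>M. f \<circ> g = g \<circ> f"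
    have "commset (insert f M)" using M(2) f(2) unfolding commset_def by (simp add: Ball_def)
    hence "insert f M \<in> ?A" using M(1) f(1) by simp
    from mx[OF this] show "f \<in> M" by blast
  qed
  with M show ?thesis by blast
qed

definition L :: "('a \<Rightarrow> 'a) set" where
  "L = (SOME S. S \<subseteq> Dset \<and> commset S \<and> (\<forall>f\<in>Dset. (\<forall>g\<in>S. f \<circ> g = g \<circ> f) \<longrightarrow> f \<in> S))"

lemma L_props: "L \<subseteq> Dset" "commset L" "\<And>f. f \<in> Dset \<Longrightarrow> (\<And>g. g \<in> L \<Longrightarrow> f \<circ> g = g \<circ> f) \<Longrightarrow> f \<in> L"
  using someI_ex[OF maxcomm_ex] unfolding L_def[symmetric] by blast+

lemma L_D: "l \<in> L \<Longrightarrow> l \<in> Dset" using L_props(1) by auto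
lemma L_comm: "l \<in> L \<Longrightarrow> m \<in> L \<Longrightarrow> l (m x) = m (l x)"
  using L_props(2) unfolding commset_def by (metis comp_apply)
lemma L_lin: "l \<in> L \<Longrightarrow> lin l" using L_D DsetD by blast
lemma L_W: "l \<in> L \<Longrightarrow> l x \<in> W" using L_D DsetD by blast
lemma L_P: "l \<in> L \<Longrightarrow> l (P x) = l x" using L_D DsetD by metis
lemma L_rho: "l \<in> L \<Longrightarrow> w \<in> W \<Longrightarrow> l (P (a * w)) = P (a * l w)" using L_D DsetD by blast
lemma L_I: "f \<in> Dset \<Longrightarrow> (\<And>g x. g \<in> L \<Longrightarrow> f (g x) = g (f x)) \<Longrightarrow> f \<in> L"
  using L_props(3) by (metis comp_apply ext)

lemma P_L: "P \<in> L"
  by (rule L_I[OF P_Dset]) (simp add: Pid L_W L_P)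

lemma W_add: "u \<in> W \<Longrightarrow> v \<in> W \<Longrightarrow> u + v \<in> W"
  by (metis Padd PW Pid)
lemma W_scale: "u \<in> W \<Longrightarrow> scale c u \<in> W"
  by (metis Pscale PW Pid)
lemma W_0: "0 \<in> W"
  by (metis P0 PW)
lemma W_neg: "u \<in> W \<Longrightarrow> - u \<in> W"
  by (metis lin_neg[OF lin_P] PW Pid)
lemma W_diff: "u \<in> W \<Longrightarrow> v \<in> W \<Longrightarrow> u - v \<in> W"
  using W_add W_neg by (metis diff_conv_add_uminus)
lemma W_sum: "(\<And>i. i \<in> I \<Longrightarrow> f i \<in> W) \<Longrightarrow> sum f I \<in> W"
  by (induct I rule: infinite_finite_induct) (auto simp: W_0 W_add)
lemma W_sum_list: "(\<And>i. i \<in> set xs \<Longrightarrow> f i \<in> W) \<Longrightarrow> sum_list (map f xs) \<in> W"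
  by (induct xs) (auto simp: W_0 W_add)

lemma lin_comp: "lin f \<Longrightarrow> lin g \<Longrightarrow> lin (f \<circ> g)"
  by (simp add: lin_def)
lemma lin_plus: "lin f \<Longrightarrow> lin g \<Longrightarrow> lin (f + g)"
  by (simp add: lin_def scale_right_distrib)
lemma lin_scalef: "lin f \<Longrightarrow> lin (\<lambda>x. scale c (f x))"
  by (simp add: lin_def scale_right_distrib)
lemma lin_uminus: "lin f \<Longrightarrow> lin (- f)"
  by (simp add: lin_def)
lemma lin_zero: "lin 0"
  by (simp add: lin_def)

lemma Dset_add: "f \<in> Dset \<Longrightarrow> g \<in> Dset \<Longrightarrow> f + g \<in> Dset"
  unfolding Dset_def by (auto simp: lin_plus W_add distrib_left Padd)
lemma Dset_comp: "f \<in> Dset \<Longrightarrow> g \<in> Dset \<Longrightarrow> f \<circ> g \<in> Dset"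
  unfolding Dset_def by (auto simp: lin_comp)
lemma Dset_scale: "f \<in> Dset \<Longrightarrow> (\<lambda>x. scale c (f x)) \<in> Dset"
  unfolding Dset_def by (auto simp: lin_scalef W_scale smult_right Pscale)
lemma Dset_neg: "f \<in> Dset \<Longrightarrow> - f \<in> Dset"
  unfolding Dset_def by (auto simp: lin_uminus W_neg lin_neg[OF lin_P])
lemma Dset_zero: "0 \<in> Dset"
  unfolding Dset_def by (auto simp: lin_zero W_0 P0)

lemma L_add: "l \<in> L \<Longrightarrow> m \<in> L \<Longrightarrow> l + m \<in> L"
  by (rule L_I) (auto simp: Dset_add L_D L_comm lin_add[OF L_lin])
lemma L_compose: "l \<in> L \<Longrightarrow> m \<in> L \<Longrightarrow> l \<circ> m \<in> L"
  by (rule L_I) (auto simp: Dset_comp L_D L_comm)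
lemma L_scale: "l \<in> L \<Longrightarrow> (\<lambda>x. scale c (l x)) \<in> L"
  by (rule L_I) (auto simp: Dset_scale L_D L_comm lin_scale[OF L_lin])
lemma L_neg: "l \<in> L \<Longrightarrow> - l \<in> L"
  by (rule L_I) (auto simp: Dset_neg L_D L_comm lin_neg[OF L_lin])
lemma L_zero: "0 \<in> L"
  by (rule L_I) (auto simp: Dset_zero lin_0[OF L_lin])
lemma L_diff: "l \<in> L \<Longrightarrow> m \<in> L \<Longrightarrow> l - m \<in> L"
  using L_add L_neg by (metis diff_conv_add_uminus)
lemma L_sum: "(\<And>i. i \<in> I \<Longrightarrow> f i \<in> L) \<Longrightarrow> sum f I \<in> L"
  by (induct I rule: infinite_finite_induct) (auto simp: L_zero L_add)
lemma L_sum_list: "(\<And>i. i \<in> set xs \<Longrightarrow> f i \<in> L) \<Longrightarrow> sum_list (map f xs) \<in> L"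
  by (induct xs) (auto simp: L_zero L_add)

lemma D_zero_iff: "f \<in> Dset \<Longrightarrow> f = 0 \<longleftrightarrow> (\<forall>w\<in>W. f w = 0)"
  by (auto simp: fun_eq_iff) (metis DsetD(2) PW)

lemma schur_inj:
  assumes f: "f \<in> Dset" "f \<noteq> 0" and w: "w \<in> W" "f w = 0"
  shows "w = 0"
proof (rule ccontr)
  assume "w \<noteq> 0"
  have "\<forall>w'\<in>W. f w' = 0"
  proof
    fix w' assume "w' \<in> W"
    then obtain a where "P (a * w) = w'" using Ptrans[OF w(1) \<open>w \<noteq> 0\<close>] by blast
    hence "f w' = P (a * f w)" by (metis DsetD(4)[OF f(1) w(1)])
    thus "f w' = 0" using w(2) P0 by simp
  qed
  with f D_zero_iff show False by blast
qed

lemma schur_surj: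
  assumes f: "f \<in> Dset" "f \<noteq> 0" and u: "u \<in> W"
  shows "\<exists>w\<in>W. f w = u"
proof -
  obtain w0 where w0: "w0 \<in> W" "f w0 \<noteq> 0" using f D_zero_iff by blast
  obtain a where "P (a * f w0) = u" using Ptrans[OF DsetD(3)[OF f(1)] w0(2) u] by blast
  hence "f (P (a * w0)) = u" using DsetD(4)[OF f(1) w0(1)] by simp
  thus ?thesis using PW by blast
qed

definition linv :: "('a \<Rightarrow> 'a) \<Rightarrow> 'a \<Rightarrow> 'a" where
  "linv f x = (THE w. w \<in> W \<and> f w = P x)"

lemma linv_spec:
  assumes f: "f \<in> Dset" "f \<noteq> 0"
  shows "linv f x \<in> W \<and> f (linv f x) = P x"
    and "w \<in> W \<Longrightarrow> f w = P x \<Longrightarrow> linv f x = w"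
proof -
  have uq: "\<And>w1 w2. w1 \<in> W \<Longrightarrow> w2 \<in> W \<Longrightarrow> f w1 = f w2 \<Longrightarrow> w1 = w2"
  proof -
    fix w1 w2 assume "w1 \<in> W" "w2 \<in> W" "f w1 = f w2"
    hence a: "f (w1 - w2) = 0" "w1 - w2 \<in> W" using lin_diff[OF DsetD(1)[OF f(1)]] W_diff by auto
    have "w1 - w2 = 0" using schur_inj[OF f a(2) a(1)] .
    thus "w1 = w2" by simp
  qed
  obtain w0 where w0: "w0 \<in> W" "f w0 = P x" using schur_surj[OF f PW] by blast
  have "\<exists>!w. w \<in> W \<and> f w = P x" using w0 uq by metis
  thus "linv f x \<in> W \<and> f (linv f x) = P x" unfolding linv_def by (rule theI')
  show "w \<in> W \<Longrightarrow> f w = P x \<Longrightarrow> linv f x = w"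
    using \<open>\<exists>!w. w \<in> W \<and> f w = P x\<close> unfolding linv_def by (rule the1_equality) auto
qed

lemma L_inv:
  assumes l: "l \<in> L" "l \<noteq> 0"
  shows "linv l \<in> L" "linv l (l x) = P x" "l (linv l x) = P x"
proof -
  have lD: "l \<in> Dset" using l L_D by auto
  note sp = linv_spec[OF lD l(2)]
  have ll: "lin l" using lD DsetD by blast
  show "linv l (l x) = P x"
    by (rule sp(2)) (auto simp: PW DsetD(2)[OF lD, symmetric] Pid DsetD(3)[OF lD])
  show "l (linv l x) = P x" using sp(1) by blast
  have D: "linv l \<in> Dset"
    unfolding Dset_def
  proof (intro CollectI conjI allI ballI)
    show "lin (linv l)" unfolding lin_def
    proof (intro conjI allI)
      fix x y show "linv l (x + y) = linv l x + linv l y"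
        by (rule sp(2)) (auto simp: W_add sp(1) lin_add[OF ll] Padd)
    next
      fix c x show "linv l (scale c x) = scale c (linv l x)"
        by (rule sp(2)) (auto simp: W_scale sp(1) lin_scale[OF ll] Pscale)
    qed
    fix x show "linv l x = linv l (P x)" by (rule sp(2)) (auto simp: sp(1) PP)
    show "linv l x \<in> W" using sp(1) by blast
  next
    fix a w assume w: "w \<in> W"
    show "linv l (P (a * w)) = P (a * linv l w)"
      by (rule sp(2)) (auto simp: PW DsetD(4)[OF lD sp(1)[THEN conjunct1]] sp(1) PP Pid[OF w])
  qed
  show "linv l \<in> L"
  proof (rule L_I[OF D])
    fix g x assume g: "g \<in> L"
    show "linv l (g x) = g (linv l x)"
      by (rule sp(2)) (auto simp: L_W[OF g] L_comm[OF l(1) g] sp(1) L_P[OF g] Pid)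
  qed
qed

end



context irrep begin

definition lc :: "nat \<Rightarrow> (nat \<Rightarrow> 'a \<Rightarrow> 'a) \<Rightarrow> (nat \<Rightarrow> 'a) \<Rightarrow> 'a" where
  "lc n ls b = (\<Sum>i<n. ls i (b i))"

definition indep :: "nat \<Rightarrow> (nat \<Rightarrow> 'a) \<Rightarrow> bool" where
  "indep n b \<longleftrightarrow> (\<forall>i<n. b i \<in> W) \<and>
     (\<forall>ls. (\<forall>i<n. ls i \<in> L) \<longrightarrow> lc n ls b = 0 \<longrightarrow> (\<forall>i<n. ls i = 0))"

definition inspan :: "nat \<Rightarrow> (nat \<Rightarrow> 'a) \<Rightarrow> 'a \<Rightarrow> bool" where
  "inspan n b w \<longleftrightarrow> (\<exists>ls. (\<forall>i<n. ls i \<in> L) \<and> w = lc n ls b)"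

lemma lc_W: "(\<And>i. i < n \<Longrightarrow> ls i \<in> L) \<Longrightarrow> lc n ls b \<in> W"
  unfolding lc_def by (rule W_sum) (auto simp: L_W)

lemma lc_cong: "(\<And>i. i < n \<Longrightarrow> ls i (b i) = ls' i (b' i)) \<Longrightarrow> lc n ls b = lc n ls' b'"
  unfolding lc_def by (rule sum.cong) auto

lemma lc_Suc: "lc (Suc n) ls b = lc n ls b + ls n (b n)"
  unfolding lc_def by simp

lemma lc_diff: "lc n (\<lambda>i. ls i - ls' i) b = lc n ls b - lc n ls' b"
  unfolding lc_def by (simp add: sum_subtractf)

lemma lc_add: "lc n (\<lambda>i. ls i + ls' i) b = lc n ls b + lc n ls' b"
  unfolding lc_def by (simp add: sum.distrib)

lemma lc_L: "m \<in> L \<Longrightarrow> m (lc n ls b) = lc n (\<lambda>i. m \<circ> ls i) b"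
  unfolding lc_def by (simp add: lin_sum[OF L_lin])

lemma lc_delta: "k < n \<Longrightarrow> lc n (\<lambda>i. if i = k then f else 0) b = f (b k)"
proof -
  assume k: "k < n"
  have "lc n (\<lambda>i. if i = k then f else 0) b = (\<Sum>i<n. if i = k then f (b i) else 0)"
    unfolding lc_def by (rule sum.cong) auto
  also have "\<dots> = f (b k)" using k by (simp add: sum.delta')
  finally show ?thesis .
qed

lemma lc_zero: "lc n (\<lambda>i. 0) b = 0"
  unfolding lc_def by simp

lemma W_ex: "\<exists>w\<in>W. w \<noteq> 0"
  using Wnz W_0 by blast

lemma P_nz: "P \<noteq> 0"
proof
  assume "P = 0"
  obtain w where "w \<in> W" "w \<noteq> 0" using W_ex by blast
  with Pid[OF this(1)] \<open>P = 0\<close> show False by simp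
qed

lemma indep_ext:
  assumes ind: "indep n b" and w: "w \<in> W" and ns: "\<not> inspan n b w"
  shows "indep (Suc n) (b(n := w))"
  unfolding indep_def
proof (intro conjI allI impI)
  fix i assume "i < Suc n" thus "(b(n := w)) i \<in> W" using ind w unfolding indep_def by auto
next
  fix ls i assume lsL: "\<forall>i<Suc n. ls i \<in> L" and z: "lc (Suc n) ls (b(n := w)) = 0" and i: "i < Suc n"
  have eq: "lc (Suc n) ls (b(n := w)) = lc n ls b + ls n w"
    unfolding lc_Suc by (simp, rule lc_cong, simp)
  have lsn: "ls n = 0"
  proof (rule ccontr)
    assume nz: "ls n \<noteq> 0"
    have lnL: "ls n \<in> L" using lsL by auto
    let ?m = "linv (ls n)"
    have mL: "?m \<in> L" using L_inv[OF lnL nz] by auto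
    have "?m (lc n ls b + ls n w) = 0" using z eq lin_0[OF L_lin[OF mL]] by simp
    hence "?m (lc n ls b) + w = 0"
      using lin_add[OF L_lin[OF mL]] L_inv(2)[OF lnL nz] Pid[OF w] by simp
    hence "lc n (\<lambda>i. ?m \<circ> ls i) b + w = 0" using lc_L[OF mL] by simp
    hence "w = - lc n (\<lambda>i. ?m \<circ> ls i) b" by (metis add.commute eq_neg_iff_add_eq_0)
    also have "\<dots> = lc n (\<lambda>i. - (?m \<circ> ls i)) b" unfolding lc_def by (simp add: sum_negf)
    finally have "inspan n b w" unfolding inspan_def
      using lsL mL by (intro exI[of _ "\<lambda>i. - (?m \<circ> ls i)"]) (auto intro!: L_neg L_compose)
    with ns show False by blast
  qed
  have "lc n ls b = 0" using z eq lsn by simp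
  hence "\<forall>i<n. ls i = 0" using ind lsL unfolding indep_def by auto
  thus "ls i = 0" using lsn i less_Suc_eq by auto
qed

lemma fin_basis: "\<exists>B. finite B \<and> span B = UNIV"
  using fin unfolding fin_dim_alg_def by blast

lemma indep_bound:
  assumes ind: "indep n b"
  shows "n \<le> card (SOME B. finite B \<and> span B = UNIV)"
proof -
  define B where "B = (SOME B. finite B \<and> span B = UNIV)"
  have B: "finite B" "span B = UNIV" using someI_ex[OF fin_basis] unfolding B_def by auto
  have bW: "\<And>i. i < n \<Longrightarrow> b i \<in> W" using ind unfolding indep_def by auto
  have indls: "\<And>ls. (\<forall>i<n. ls i \<in> L) \<Longrightarrow> lc n ls b = 0 \<Longrightarrow> \<forall>i<n. ls i = 0"
    using ind unfolding indep_def by blast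
  have inj: "inj_on b {..<n}"
  proof (rule inj_onI)
    fix i j assume i: "i \<in> {..<n}" and j: "j \<in> {..<n}" and e: "b i = b j"
    show "i = j"
    proof (rule ccontr)
      assume ne: "i \<noteq> j"
      let ?ls = "\<lambda>k. (if k = i then P else 0) - (if k = j then P else 0)"
      have "lc n ?ls b = P (b i) - P (b j)"
        using lc_diff[of n "\<lambda>k. if k = i then P else 0" "\<lambda>k. if k = j then P else 0" b]
          lc_delta[of i n P b] lc_delta[of j n P b] i j by simp
      hence "lc n ?ls b = 0" using e by simp
      moreover have "\<forall>k<n. ?ls k \<in> L" by (auto intro!: L_diff P_L L_zero L_neg)
      ultimately have "\<forall>k<n. ?ls k = 0" by (rule indls[rotated])
      hence "?ls i = 0" using i by blast
      thus False using ne P_nz by simp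
    qed
  qed
  have "independent (b ` {..<n})"
  proof (rule independent_if_scalars_zero)
    show "finite (b ` {..<n})" by simp
    fix f x assume s: "(\<Sum>x\<in>b ` {..<n}. scale (f x) x) = 0" and x: "x \<in> b ` {..<n}"
    let ?ls = "\<lambda>k. (\<lambda>z. scale (f (b k)) (P z))"
    have "lc n ?ls b = (\<Sum>k<n. scale (f (b k)) (b k))"
      unfolding lc_def by (rule sum.cong) (auto simp: Pid bW)
    also have "\<dots> = (\<Sum>x\<in>b ` {..<n}. scale (f x) x)"
      using sum.reindex[OF inj, of "\<lambda>x. scale (f x) x"] by simp
    finally have "lc n ?ls b = 0" using s by simp
    moreover have "\<forall>k<n. ?ls k \<in> L" using L_scale[OF P_L] by auto
    ultimately have z: "\<forall>k<n. ?ls k = 0" by (rule indls[rotated])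
    obtain k where k: "k < n" "x = b k" using x by auto
    obtain w where w: "w \<in> W" "w \<noteq> 0" using W_ex by blast
    have "scale (f (b k)) (P w) = 0" using z k(1) by (metis zero_fun_apply)
    thus "f x = 0" using k Pid[OF w(1)] w(2) by simp
  qed
  from independent_span_bound[OF B(1) this] B(2)
  have "card (b ` {..<n}) \<le> card B" by auto
  thus ?thesis using card_image[OF inj] B_def by simp
qed

lemma basis_ex: "\<exists>d b. indep d b \<and> (\<forall>w\<in>W. inspan d b w)"
proof -
  let ?Q = "\<lambda>n. \<exists>b. indep n b"
  have "?Q 0" unfolding indep_def lc_def by auto
  then obtain d where d: "?Q d" and mx: "\<forall>y. ?Q y \<longrightarrow> y \<le> d"
    using Nat.ex_has_greatest_nat[of ?Q 0 "card (SOME B. finite B \<and> span B = UNIV)"] indep_bound by blast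
  obtain b where b: "indep d b" using d by blast
  have "\<forall>w\<in>W. inspan d b w"
  proof (rule ccontr)
    assume "\<not> (\<forall>w\<in>W. inspan d b w)"
    then obtain w where "w \<in> W" "\<not> inspan d b w" by blast
    from indep_ext[OF b this] mx show False by fastforce
  qed
  with b show ?thesis by blast
qed

definition "dd = fst (SOME p. indep (fst p) (snd p) \<and> (\<forall>w\<in>W. inspan (fst p) (snd p) w))"
definition "bs = snd (SOME p. indep (fst p) (snd p) \<and> (\<forall>w\<in>W. inspan (fst p) (snd p) w))"

lemma bs_props: "indep dd bs" "\<forall>w\<in>W. inspan dd bs w"
proof -
  have "\<exists>p. indep (fst p) (snd p) \<and> (\<forall>w\<in>W. inspan (fst p) (snd p) w)"
    using basis_ex by auto
  from someI_ex[OF this] show "indep dd bs" "\<forall>w\<in>W. inspan dd bs w"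
    unfolding dd_def bs_def by auto
qed

lemma bs_W: "i < dd \<Longrightarrow> bs i \<in> W"
  using bs_props(1) unfolding indep_def by auto

definition coords :: "'a \<Rightarrow> nat \<Rightarrow> 'a \<Rightarrow> 'a" where
  "coords w = (SOME ls. (\<forall>i<dd. ls i \<in> L) \<and> w = lc dd ls bs)"

lemma coords_spec: "w \<in> W \<Longrightarrow> (\<forall>i<dd. coords w i \<in> L) \<and> w = lc dd (coords w) bs"
proof -
  assume "w \<in> W"
  hence "\<exists>ls. (\<forall>i<dd. ls i \<in> L) \<and> w = lc dd ls bs" using bs_props(2) unfolding inspan_def by blast
  thus ?thesis unfolding coords_def by (rule someI_ex)
qed

lemma bs_indep: "(\<forall>i<dd. ls i \<in> L) \<Longrightarrow> lc dd ls bs = 0 \<Longrightarrow> i < dd \<Longrightarrow> ls i = 0"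
  using bs_props(1) unfolding indep_def by blast

lemma coords_L: "w \<in> W \<Longrightarrow> i < dd \<Longrightarrow> coords w i \<in> L"
  using coords_spec by blast

lemma coord_unique:
  assumes "\<forall>i<dd. ls i \<in> L" "\<forall>i<dd. ls' i \<in> L" "lc dd ls bs = lc dd ls' bs" "i < dd"
  shows "ls i = ls' i"
proof -
  have "lc dd (\<lambda>i. ls i - ls' i) bs = 0" unfolding lc_diff assms(3) by simp
  moreover have "\<forall>i<dd. ls i - ls' i \<in> L" using assms(1,2) L_diff by auto
  ultimately have "(\<lambda>i. ls i - ls' i) i = 0" using assms(4) by (intro bs_indep)
  thus ?thesis by simp
qed

lemma coords_eqI:
  assumes "\<forall>i<dd. ls i \<in> L" "i < dd"
  shows "coords (lc dd ls bs) i = ls i"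
proof -
  have w: "lc dd ls bs \<in> W" using assms(1) lc_W by auto
  show ?thesis using coord_unique[of "coords (lc dd ls bs)" ls i] coords_spec[OF w] assms by auto
qed

lemma coords_add: "u \<in> W \<Longrightarrow> v \<in> W \<Longrightarrow> i < dd \<Longrightarrow> coords (u + v) i = coords u i + coords v i"
proof -
  assume u: "u \<in> W" and v: "v \<in> W" and i: "i < dd"
  have u': "lc dd (coords u) bs = u" and v': "lc dd (coords v) bs = v"
    using coords_spec[OF u] coords_spec[OF v] by auto
  have e: "u + v = lc dd (\<lambda>i. coords u i + coords v i) bs"
    unfolding lc_add u' v' ..
  have l: "\<forall>i<dd. coords u i + coords v i \<in> L" using coords_L u v L_add by auto
  show ?thesis unfolding e coords_eqI[OF l i] ..
qed

lemma coords_Lmul: "m \<in> L \<Longrightarrow> u \<in> W \<Longrightarrow> i < dd \<Longrightarrow> coords (m u) i = m \<circ> coords u i"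
proof -
  assume m: "m \<in> L" and u: "u \<in> W" and i: "i < dd"
  have u': "lc dd (coords u) bs = u" using coords_spec[OF u] by auto
  have e: "m u = lc dd (\<lambda>i. m \<circ> coords u i) bs"
    unfolding lc_L[OF m, symmetric] u' ..
  have l: "\<forall>i<dd. m \<circ> coords u i \<in> L" using coords_L u m L_compose by auto
  show ?thesis unfolding e coords_eqI[OF l i] ..
qed

lemma coords_basis: "k < dd \<Longrightarrow> i < dd \<Longrightarrow> coords (bs k) i = (if i = k then P else 0)"
proof -
  assume k: "k < dd" and i: "i < dd"
  have e: "bs k = lc dd (\<lambda>i. if i = k then P else 0) bs"
    using lc_delta[OF k] Pid[OF bs_W[OF k]] by simp
  have l: "\<forall>i<dd. (if i = k then P else 0) \<in> L" using P_L L_zero by auto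
  show ?thesis unfolding e coords_eqI[OF l i] ..
qed

lemma coords_0: "i < dd \<Longrightarrow> coords 0 i = 0"
proof -
  assume i: "i < dd"
  have e: "(0::'a) = lc dd (\<lambda>i. 0) bs" using lc_zero by simp
  have l: "\<forall>i<dd. (\<lambda>i. 0::'a\<Rightarrow>'a) i \<in> L" using L_zero by auto
  show ?thesis by (subst e) (rule coords_eqI[OF l i])
qed

lemma coords_sum: "(\<And>j. j \<in> J \<Longrightarrow> f j \<in> W) \<Longrightarrow> i < dd \<Longrightarrow> coords (sum f J) i = (\<Sum>j\<in>J. coords (f j) i)"
proof (induct J rule: infinite_finite_induct)
  case (infinite A) thus ?case by (simp add: coords_0)
next
  case empty thus ?case by (simp add: coords_0)
next
  case (insert x F)
  thus ?case by (simp add: coords_add W_sum)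
qed

lemma coords_sum_list: "(\<And>j. j \<in> set xs \<Longrightarrow> f j \<in> W) \<Longrightarrow> i < dd \<Longrightarrow>
  coords (sum_list (map f xs)) i = sum_list (map (\<lambda>j. coords (f j) i) xs)"
  by (induct xs) (auto simp: coords_0 coords_add W_sum_list)

end



context falg begin
lemma functional_ex:
  assumes q: "q \<noteq> 0"
  shows "\<exists>g. (\<forall>x y. g (x + y) = g x + g y) \<and> (\<forall>c x. g (scale c x) = c * g x) \<and> g q \<noteq> 0"
proof -
  have i: "independent {q}" using q by simp
  define B where "B = extend_basis {q}"
  have B: "independent B" "span B = UNIV" "q \<in> B"
    using extend_basis_superset[OF i] independent_extend_basis[OF i] span_extend_basis[OF i]
    unfolding B_def by auto
  define g where "g x = representation B x q" for x
  have "\<forall>x y. g (x + y) = g x + g y"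
    unfolding g_def using representation_add[OF B(1)] B(2) by simp
  moreover have "\<forall>c x. g (scale c x) = c * g x"
    unfolding g_def using representation_scale[OF B(1)] B(2) by simp
  moreover have "g q = 1" unfolding g_def using representation_basis[OF B(1,3)] by simp
  ultimately show ?thesis by (intro exI[of _ g]) auto
qed
end

context irrep begin

definition tau :: "'a \<Rightarrow> 'a \<Rightarrow> 'a" where
  "tau a = (\<Sum>i<dd. coords (P (a * bs i)) i)"

lemma tau_L: "tau a \<in> L"
  unfolding tau_def by (rule L_sum) (auto intro: coords_L PW)

lemma expand:
  assumes w: "w \<in> W"
  shows "P (x * w) = (\<Sum>k<dd. coords w k (P (x * bs k)))"
proof -
  have w': "lc dd (coords w) bs = w" using coords_spec[OF w] by auto
  have "P (x * w) = P (x * lc dd (coords w) bs)" by (simp only: w')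
  also have "\<dots> = (\<Sum>k<dd. P (x * coords w k (bs k)))"
    unfolding lc_def sum_distrib_left lin_sum[OF lin_P] ..
  also have "\<dots> = (\<Sum>k<dd. coords w k (P (x * bs k)))"
    by (rule sum.cong) (auto simp: L_rho coords_L w bs_W)
  finally show ?thesis .
qed

lemma tau_mult: "tau (x * y) = (\<Sum>j<dd. \<Sum>k<dd. coords (P (y * bs j)) k \<circ> coords (P (x * bs k)) j)"
  unfolding tau_def
proof (rule sum.cong[OF refl])
  fix j assume j: "j \<in> {..<dd}"
  have "P (x * y * bs j) = P (x * P (y * bs j))" using Pcomp[OF bs_W] j by simp
  also have "\<dots> = (\<Sum>k<dd. coords (P (y * bs j)) k (P (x * bs k)))" by (rule expand[OF PW])
  finally have e: "P (x * y * bs j) = (\<Sum>k<dd. coords (P (y * bs j)) k (P (x * bs k)))" .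
  show "coords (P (x * y * bs j)) j = (\<Sum>k<dd. coords (P (y * bs j)) k \<circ> coords (P (x * bs k)) j)"
    unfolding e using j
    by (subst coords_sum) (auto intro!: sum.cong L_W[OF coords_L[OF PW]] coords_Lmul coords_L PW)
qed

lemma L_comp_comm: "f \<in> L \<Longrightarrow> g \<in> L \<Longrightarrow> f \<circ> g = g \<circ> f"
  by (auto simp: fun_eq_iff L_comm)

lemma tau_comm: "tau (x * y) = tau (y * x)"
proof -
  have "tau (y * x) = (\<Sum>j<dd. \<Sum>k<dd. coords (P (x * bs j)) k \<circ> coords (P (y * bs k)) j)"
    by (rule tau_mult)
  also have "\<dots> = (\<Sum>k<dd. \<Sum>j<dd. coords (P (x * bs j)) k \<circ> coords (P (y * bs k)) j)"
    by (rule sum.swap)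
  also have "\<dots> = (\<Sum>k<dd. \<Sum>j<dd. coords (P (y * bs k)) j \<circ> coords (P (x * bs j)) k)"
    by (intro sum.cong refl L_comp_comm coords_L PW) auto
  also have "\<dots> = tau (x * y)" by (rule tau_mult[symmetric])
  finally show ?thesis ..
qed

lemma tau_add: "tau (x + y) = tau x + tau y"
  unfolding tau_def sum.distrib[symmetric]
  by (rule sum.cong) (auto simp: distrib_right Padd coords_add PW)

lemma tau_scale: "tau (scale c x) = (\<lambda>z. scale c (P z)) \<circ> tau x"
proof -
  let ?s = "\<lambda>z. scale c (P z)"
  have sL: "?s \<in> L" by (rule L_scale[OF P_L])
  have "tau (scale c x) = (\<Sum>i<dd. ?s \<circ> coords (P (x * bs i)) i)"
    unfolding tau_def
  proof (rule sum.cong[OF refl])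
    fix i assume i: "i \<in> {..<dd}"
    have "P (scale c x * bs i) = ?s (P (x * bs i))" by (simp add: smult_left Pscale PP)
    thus "coords (P (scale c x * bs i)) i = ?s \<circ> coords (P (x * bs i)) i"
      using coords_Lmul[OF sL PW] i by simp
  qed
  also have "\<dots> = ?s \<circ> tau x"
    unfolding tau_def by (auto simp: fun_eq_iff sum_fun_apply lin_sum[OF L_lin[OF sL]])
  finally show ?thesis .
qed

lemma tau_ann: "(\<And>w. w \<in> W \<Longrightarrow> P (n * w) = 0) \<Longrightarrow> tau n = 0"
  unfolding tau_def by (auto intro!: sum.neutral simp: bs_W coords_0)

end



context irrep begin

definition app :: "('a \<times> ('a \<Rightarrow> 'a)) list \<Rightarrow> 'a \<Rightarrow> 'a" where
  "app es w = sum_list (map (\<lambda>(y, l). P (y * l w)) es)"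

definition valid :: "('a \<times> ('a \<Rightarrow> 'a)) list \<Rightarrow> bool" where
  "valid es \<longleftrightarrow> (\<forall>p\<in>set es. snd p \<in> L)"

lemma app_Nil[simp]: "app [] w = 0" by (simp add: app_def)
lemma app_Cons[simp]: "app ((y, l) # es) w = P (y * l w) + app es w" by (simp add: app_def)
lemma app_append: "app (es1 @ es2) w = app es1 w + app es2 w" by (simp add: app_def)
lemma valid_Cons[simp]: "valid ((y, l) # es) \<longleftrightarrow> l \<in> L \<and> valid es" by (simp add: valid_def)
lemma valid_append[simp]: "valid (es1 @ es2) \<longleftrightarrow> valid es1 \<and> valid es2" by (auto simp: valid_def)
lemma valid_Nil[simp]: "valid []" by (simp add: valid_def)

lemma app_W: "app es w \<in> W"
  unfolding app_def by (rule W_sum_list) (auto simp: PW)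

lemma app_neg: "app (map (\<lambda>(y, l). (- y, l)) es) w = - app es w"
  by (induct es) (auto simp: lin_neg[OF lin_P])

lemma valid_map_neg: "valid es \<Longrightarrow> valid (map (\<lambda>(y, l). (- y, l)) es)"
  by (induct es) auto

lemma app_lmul: "valid es \<Longrightarrow> app (map (\<lambda>(y, l). (a * y, l)) es) w = P (a * app es w)"
proof (induct es)
  case Nil thus ?case by (simp add: P0)
next
  case (Cons p es)
  obtain y l where p: "p = (y, l)" by (cases p)
  have l: "l \<in> L" using Cons p by simp
  have "P (a * y * l w) = P (a * P (y * l w))" using Pcomp[OF L_W[OF l]] by simp
  thus ?case using Cons p by (simp add: distrib_left Padd)
qed

lemma valid_map_lmul: "valid es \<Longrightarrow> valid (map (\<lambda>(y, l). (a * y, l)) es)"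
  by (induct es) auto

lemma app_scale: "app (map (\<lambda>(y, l). (scale c y, l)) es) w = scale c (app es w)"
  by (induct es) (auto simp: smult_left Pscale scale_right_distrib)

lemma valid_map_scale: "valid es \<Longrightarrow> valid (map (\<lambda>(y, l). (scale c y, l)) es)"
  by (induct es) auto

lemma app_Lcomp: "valid es \<Longrightarrow> m \<in> L \<Longrightarrow> app (map (\<lambda>(y, l). (y, m \<circ> l)) es) w = m (app es w)"
proof (induct es)
  case Nil thus ?case by (simp add: lin_0[OF L_lin])
next
  case (Cons p es)
  obtain y l where p: "p = (y, l)" by (cases p)
  have l: "l \<in> L" using Cons p by simp
  have "P (y * m (l w)) = m (P (y * l w))" using L_rho[OF Cons(3) L_W[OF l]] by simp
  thus ?case using Cons p by (simp add: lin_add[OF L_lin])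
qed

lemma valid_map_Lcomp: "valid es \<Longrightarrow> m \<in> L \<Longrightarrow> valid (map (\<lambda>(y, l). (y, m \<circ> l)) es)"
  by (induct es) (auto intro: L_compose)

lemma app_add: "valid es \<Longrightarrow> app es (x + z) = app es x + app es z"
proof (induct es)
  case Nil thus ?case by simp
next
  case (Cons p es)
  obtain y l where p: "p = (y, l)" by (cases p)
  have l: "l \<in> L" using Cons p by simp
  show ?case using Cons p by (simp add: lin_add[OF L_lin[OF l]] distrib_left Padd algebra_simps)
qed

lemma app_commL: "valid es \<Longrightarrow> m \<in> L \<Longrightarrow> app es (m x) = m (app es x)"
proof (induct es)
  case Nil thus ?case by (simp add: lin_0[OF L_lin])
next
  case (Cons p es)
  obtain y l where p: "p = (y, l)" by (cases p)
  have l: "l \<in> L" using Cons p by simp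
  have "P (y * l (m x)) = m (P (y * l x))"
    using L_rho[OF Cons(3) L_W[OF l]] L_comm[OF l Cons(3)] by simp
  thus ?case using Cons p by (simp add: lin_add[OF L_lin[OF Cons(3)]])
qed

lemma app_P: "valid es \<Longrightarrow> app es (P x) = app es x"
proof (induct es)
  case Nil thus ?case by simp
next
  case (Cons p es)
  obtain y l where p: "p = (y, l)" by (cases p)
  have l: "l \<in> L" using Cons p by simp
  show ?case using Cons p L_P[OF l] by simp
qed

lemma app_id: "w \<in> W \<Longrightarrow> app [(1, P)] w = w"
  by (simp add: PP Pid)

lemma app_concat: "app (concat (map E xs)) w = sum_list (map (\<lambda>i. app (E i) w) xs)"
  by (induct xs) (auto simp: app_append)

lemma valid_concat: "(\<And>i. i \<in> set xs \<Longrightarrow> valid (E i)) \<Longrightarrow> valid (concat (map E xs))"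
  by (induct xs) auto

lemma app_0: "valid es \<Longrightarrow> app es 0 = 0"
proof (induct es)
  case Nil thus ?case by simp
next
  case (Cons p es)
  obtain y l where p: "p = (y, l)" by (cases p)
  have l: "l \<in> L" using Cons p by simp
  show ?case using Cons p lin_0[OF L_lin[OF l]] P0 by simp
qed

lemma indep_Suc:
  assumes A: "indep (Suc n) b" shows "indep n b"
proof -
  have bW: "\<forall>i<Suc n. b i \<in> W" and a: "\<And>ls. (\<forall>i<Suc n. ls i \<in> L) \<Longrightarrow> lc (Suc n) ls b = 0 \<Longrightarrow> (\<forall>i<Suc n. ls i = 0)"
    using A unfolding indep_def by blast+
  have "\<forall>ls. (\<forall>i<n. ls i \<in> L) \<longrightarrow> lc n ls b = 0 \<longrightarrow> (\<forall>i<n. ls i = 0)"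
  proof (intro allI impI)
    fix ls i assume ls: "\<forall>i<n. ls i \<in> L" "lc n ls b = 0" and i: "i < n"
    let ?ls = "ls(n := 0)"
    have "lc (Suc n) ?ls b = lc n ?ls b" unfolding lc_Suc by simp
    also have "lc n ?ls b = lc n ls b" by (rule lc_cong) simp
    finally have "lc (Suc n) ?ls b = 0" using ls by simp
    moreover have "\<forall>i<Suc n. ?ls i \<in> L" using ls L_zero less_Suc_eq by auto
    ultimately have "\<forall>i<Suc n. ?ls i = 0" by (rule a[rotated])
    thus "ls i = 0" using i by (metis fun_upd_apply less_Suc_eq nat_neq_iff)
  qed
  thus ?thesis using bW unfolding indep_def by auto
qed

end



context irrep begin

lemma app_concat_upt: "app (concat (map E [0..<n])) w = (\<Sum>i<n. app (E i) w)"
  by (induct n) (auto simp: app_append)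

lemma valid_concat_upt: "(\<And>i. valid (E i)) \<Longrightarrow> valid (concat (map E [0..<n]))"
  by (induct n) auto

lemma sep_lemma:
  assumes ind: "indep (Suc n) b"
    and IH: "\<And>ws. (\<forall>i<n. ws i \<in> W) \<Longrightarrow> \<exists>es. valid es \<and> (\<forall>i<n. app es (b i) = ws i)"
  shows "\<exists>es. valid es \<and> (\<forall>i<n. app es (b i) = 0) \<and> app es (b n) \<noteq> 0"
proof (rule ccontr)
  assume "\<not> ?thesis"
  hence H: "\<And>es. valid es \<Longrightarrow> (\<forall>i<n. app es (b i) = 0) \<Longrightarrow> app es (b n) = 0" by blast
  have bW: "\<And>i. i < Suc n \<Longrightarrow> b i \<in> W" using ind unfolding indep_def by blast
  have WD: "app es1 (b n) = app es2 (b n)"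
    if v: "valid es1" "valid es2" and e: "\<forall>i<n. app es1 (b i) = app es2 (b i)" for es1 es2
  proof -
    let ?es = "es1 @ map (\<lambda>(y, l). (- y, l)) es2"
    have av: "app ?es w = app es1 w - app es2 w" for w by (simp add: app_append app_neg)
    have "valid ?es" using v valid_map_neg by simp
    moreover have "\<forall>i<n. app ?es (b i) = 0" using e av by simp
    ultimately have "app ?es (b n) = 0" by (rule H)
    thus ?thesis using av by simp
  qed
  define spec where "spec i x es \<longleftrightarrow> valid es \<and> (\<forall>j<n. app es (b j) = (if j = i then P x else 0))"
    for i x es
  have ex: "\<exists>es. spec i x es" for i x
    using IH[of "\<lambda>j. if j = i then P x else 0"] unfolding spec_def by (auto simp: PW W_0)
  define E where "E i x = (SOME es. spec i x es)" for i x
  have E: "spec i x (E i x)" for i x unfolding E_def by (rule someI_ex[OF ex])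
  define f where "f i x = app (E i x) (b n)" for i x
  have fchar: "f i x = app es (b n)" if "spec i x es" for i x es
    unfolding f_def using E[of i x] that unfolding spec_def by (intro WD) auto
  have fD: "f i \<in> Dset" for i
    unfolding Dset_def
  proof (intro CollectI conjI allI ballI)
    show "lin (f i)" unfolding lin_def
    proof (intro conjI allI)
      fix x y
      have "spec i (x + y) (E i x @ E i y)"
        using E[of i x] E[of i y] unfolding spec_def by (auto simp: app_append Padd)
      hence "f i (x + y) = app (E i x @ E i y) (b n)" by (rule fchar)
      thus "f i (x + y) = f i x + f i y" unfolding f_def app_append .
    next
      fix c x
      have "spec i (scale c x) (map (\<lambda>(y, l). (scale c y, l)) (E i x))"
        using E[of i x] unfolding spec_def by (auto simp: app_scale valid_map_scale Pscale)
      hence "f i (scale c x) = app (map (\<lambda>(y, l). (scale c y, l)) (E i x)) (b n)" by (rule fchar)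
      thus "f i (scale c x) = scale c (f i x)" unfolding f_def app_scale .
    qed
  next
    fix x
    have "spec i x (E i (P x))" using E[of i "P x"] unfolding spec_def by (simp add: PP)
    hence "f i x = app (E i (P x)) (b n)" by (rule fchar)
    thus "f i x = f i (P x)" unfolding f_def .
  next
    fix x show "f i x \<in> W" unfolding f_def by (rule app_W)
  next
    fix a w assume w: "w \<in> W"
    have "spec i (P (a * w)) (map (\<lambda>(y, l). (a * y, l)) (E i w))"
      using E[of i w] unfolding spec_def by (auto simp: app_lmul valid_map_lmul Pid[OF w] PP P0)
    hence "f i (P (a * w)) = app (map (\<lambda>(y, l). (a * y, l)) (E i w)) (b n)" by (rule fchar)
    also have "\<dots> = P (a * app (E i w) (b n))" using E[of i w] unfolding spec_def by (simp add: app_lmul)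
    finally show "f i (P (a * w)) = P (a * f i w)" unfolding f_def .
  qed
  have fL: "f i \<in> L" for i
  proof (rule L_I[OF fD])
    fix g x assume g: "g \<in> L"
    have "spec i (g x) (map (\<lambda>(y, l). (y, g \<circ> l)) (E i x))"
      using E[of i x] unfolding spec_def
      by (auto simp: app_Lcomp valid_map_Lcomp g L_P[OF g] lin_0[OF L_lin[OF g]] Pid[OF L_W[OF g]])
    hence "f i (g x) = app (map (\<lambda>(y, l). (y, g \<circ> l)) (E i x)) (b n)" by (rule fchar)
    also have "\<dots> = g (app (E i x) (b n))" using E[of i x] g unfolding spec_def by (simp add: app_Lcomp)
    finally show "f i (g x) = g (f i x)" unfolding f_def .
  qed
  define Es where "Es = concat (map (\<lambda>i. E i (b i)) [0..<n])"
  have vEs: "valid Es" unfolding Es_def using E unfolding spec_def by (intro valid_concat_upt) auto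
  have Es_b: "app Es (b j) = b j" if j: "j < n" for j
  proof -
    have "app Es (b j) = (\<Sum>i<n. app (E i (b i)) (b j))" unfolding Es_def by (rule app_concat_upt)
    also have "\<dots> = (\<Sum>i<n. if j = i then P (b i) else 0)"
      by (rule sum.cong) (use E j in \<open>auto simp: spec_def\<close>)
    also have "\<dots> = b j" using j by (simp add: Pid bW)
    finally show ?thesis .
  qed
  have "app [(1, P)] (b n) = app Es (b n)"
    by (rule WD) (auto simp: vEs P_L Es_b PP Pid bW)
  hence "b n = (\<Sum>i<n. f i (b i))" unfolding Es_def app_concat_upt f_def
    using app_id[OF bW[of n]] by simp
  define ls where "ls i = (if i < n then f i else - P)" for i
  have "lc (Suc n) ls b = (\<Sum>i<n. f i (b i)) - b n"
    unfolding lc_Suc lc_def ls_def using Pid[OF bW[of n]] by simp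
  hence "lc (Suc n) ls b = 0" using \<open>b n = _\<close> by simp
  moreover have "\<forall>i<Suc n. ls i \<in> L" unfolding ls_def using fL L_neg P_L by auto
  ultimately have "ls n = 0" using ind unfolding indep_def by blast
  thus False unfolding ls_def using P_nz by simp
qed

lemma dens: "indep n b \<Longrightarrow> (\<forall>i<n. ws i \<in> W) \<Longrightarrow> \<exists>es. valid es \<and> (\<forall>i<n. app es (b i) = ws i)"
proof (induct n arbitrary: ws)
  case 0 thus ?case by (intro exI[of _ "[]"]) auto
next
  case (Suc n)
  have ib: "indep n b" using indep_Suc[OF Suc.prems(1)] .
  have IH: "\<And>ws. (\<forall>i<n. ws i \<in> W) \<Longrightarrow> \<exists>es. valid es \<and> (\<forall>i<n. app es (b i) = ws i)"
    using Suc.hyps[OF ib] .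
  obtain es0 where es0: "valid es0" "\<forall>i<n. app es0 (b i) = 0" "app es0 (b n) \<noteq> 0"
    using sep_lemma[OF Suc.prems(1) IH] by blast
  obtain es1 where es1: "valid es1" "\<forall>i<n. app es1 (b i) = ws i"
    using IH[of ws] Suc.prems(2) by auto
  have "ws n - app es1 (b n) \<in> W" using Suc.prems(2) app_W W_diff by auto
  then obtain a where a: "P (a * app es0 (b n)) = ws n - app es1 (b n)"
    using Ptrans[OF app_W es0(3)] by blast
  let ?es = "map (\<lambda>(y, l). (a * y, l)) es0 @ es1"
  have "valid ?es" using es0 es1 valid_map_lmul by simp
  moreover have "\<forall>i<Suc n. app ?es (b i) = ws i"
  proof (intro allI impI)
    fix i assume "i < Suc n"
    thus "app ?es (b i) = ws i"
      using es0 es1 a by (cases "i = n") (auto simp: app_append app_lmul P0)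
  qed
  ultimately show ?case by blast
qed

end



context irrep begin

lemma dd_pos: "0 < dd"
proof (rule ccontr)
  assume "\<not> 0 < dd" hence d0: "dd = 0" by simp
  obtain w where w: "w \<in> W" "w \<noteq> 0" using W_ex by blast
  have "inspan dd bs w" using bs_props(2) w(1) by blast
  hence "w = 0" unfolding inspan_def lc_def d0 by simp
  with w show False by simp
qed

lemma sum_list_zero': "(\<And>p. p \<in> set xs \<Longrightarrow> f p = 0) \<Longrightarrow> sum_list (map f xs) = 0"
  by (induct xs) auto

lemma trace_app:
  "valid es \<Longrightarrow> (\<Sum>j<dd. coords (app (map (\<lambda>(y, l). (z * y, l)) es) (bs j)) j)
      = sum_list (map (\<lambda>(y, l). l \<circ> tau (z * y)) es)"
proof (induct es)
  case Nil thus ?case by (simp add: coords_0)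
next
  case (Cons p es)
  obtain y l where p: "p = (y, l)" by (cases p)
  have l: "l \<in> L" and v: "valid es" using Cons.prems p by auto
  let ?r = "map (\<lambda>(y, l). (z * y, l)) es"
  have "(\<Sum>j<dd. coords (app (map (\<lambda>(y, l). (z * y, l)) (p # es)) (bs j)) j)
      = (\<Sum>j<dd. coords (P (z * y * l (bs j))) j + coords (app ?r (bs j)) j)"
    unfolding p by (intro sum.cong refl) (simp add: coords_add PW app_W)
  also have "\<dots> = (\<Sum>j<dd. l \<circ> coords (P (z * y * bs j)) j) + (\<Sum>j<dd. coords (app ?r (bs j)) j)"
    unfolding sum.distrib
    by (intro arg_cong2[where f="(+)"] sum.cong refl)
       (simp add: L_rho[OF l bs_W, symmetric] coords_Lmul[OF l PW])
  also have "(\<Sum>j<dd. l \<circ> coords (P (z * y * bs j)) j) = l \<circ> tau (z * y)"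
    unfolding tau_def by (auto simp: fun_eq_iff sum_fun_apply lin_sum[OF L_lin[OF l]])
  finally show ?case using Cons.hyps[OF v] p by simp
qed

lemma main_irrep:
  assumes v0: "v0 \<in> W" "P (a * v0) \<noteq> 0"
  shows "\<exists>\<theta>. (\<forall>x y. \<theta> (x + y) = \<theta> x + \<theta> y) \<and> (\<forall>c x. \<theta> (scale c x) = c * \<theta> x)
    \<and> (\<forall>x y. \<theta> (x * y) = \<theta> (y * x)) \<and> (\<forall>n. (\<forall>w\<in>W. P (n * w) = 0) \<longrightarrow> \<theta> n = 0)
    \<and> (\<exists>x y. \<theta> (x * a * y) \<noteq> 0)"
proof -
  have ws: "\<forall>i<dd. (if i = 0 then v0 else 0) \<in> W" using v0 W_0 by auto
  obtain es where es: "valid es" "\<forall>i<dd. app es (bs i) = (if i = 0 then v0 else 0)"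
    using dens[OF bs_props(1) ws] by blast
  obtain x where x: "P (x * P (a * v0)) = bs 0"
    using Ptrans[OF PW v0(2) bs_W[OF dd_pos]] by blast
  let ?es = "map (\<lambda>(y, l). (x * a * y, l)) es"
  have app': "app ?es w = P (x * P (a * app es w))" for w
    using app_lmul[OF es(1), of "x * a" w] Pcomp[OF app_W, of x a es w] by simp
  have at: "app ?es (bs i) = (if i = 0 then bs 0 else 0)" if i: "i < dd" for i
    using es(2) i x by (auto simp: app' P0)
  have "(\<Sum>j<dd. coords (app ?es (bs j)) j) = (\<Sum>j<dd. if j = 0 then P else 0)"
    by (rule sum.cong) (auto simp: at coords_basis dd_pos coords_0)
  also have "\<dots> = P" using dd_pos by simp
  finally have "sum_list (map (\<lambda>(y, l). l \<circ> tau (x * a * y)) es) = P"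
    using trace_app[OF es(1), of "x * a"] by simp
  hence "\<exists>p\<in>set es. tau (x * a * fst p) \<noteq> 0"
  proof (rule contrapos_pp)
    assume "\<not> (\<exists>p\<in>set es. tau (x * a * fst p) \<noteq> 0)"
    hence "\<forall>p\<in>set es. tau (x * a * fst p) = 0" by blast
    hence "sum_list (map (\<lambda>(y, l). l \<circ> tau (x * a * y)) es) = 0"
    proof (intro sum_list_zero')
      fix q assume q: "q \<in> set es"
      obtain yy ll where qq: "q = (yy, ll)" by (cases q)
      have ll: "ll \<in> L" using es(1) q qq unfolding valid_def by auto
      have "tau (x * a * yy) = 0" using \<open>\<forall>p\<in>set es. _\<close> q qq by auto
      thus "(case q of (y, l) \<Rightarrow> l \<circ> tau (x * a * y)) = 0"
        using qq lin_0[OF L_lin[OF ll]] by (simp add: fun_eq_iff)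
    qed
    thus "sum_list (map (\<lambda>(y, l). l \<circ> tau (x * a * y)) es) \<noteq> P" using P_nz by simp
  qed
  then obtain y where y: "tau (x * a * y) \<noteq> 0" by auto
  then obtain p where p: "tau (x * a * y) p \<noteq> 0" by (auto simp: fun_eq_iff)
  obtain g where g: "\<forall>x y. g (x + y) = g x + g y" "\<forall>c x. g (scale c x) = c * g x"
    "g (tau (x * a * y) p) \<noteq> 0"
    using functional_ex[OF p] by blast
  have g0: "g 0 = 0" using g(2)[rule_format, of 0 0] by simp
  define \<theta> where "\<theta> z = g (tau z p)" for z
  have "\<forall>x y. \<theta> (x + y) = \<theta> x + \<theta> y" unfolding \<theta>_def by (simp add: tau_add g(1))
  moreover have "\<forall>c x. \<theta> (scale c x) = c * \<theta> x"
    unfolding \<theta>_def by (simp add: tau_scale Pid[OF L_W[OF tau_L]] g(2))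
  moreover have "\<forall>x y. \<theta> (x * y) = \<theta> (y * x)" unfolding \<theta>_def using tau_comm by simp
  moreover have "\<forall>n. (\<forall>w\<in>W. P (n * w) = 0) \<longrightarrow> \<theta> n = 0"
    unfolding \<theta>_def using tau_ann g0 by simp
  moreover have "\<theta> (x * a * y) \<noteq> 0" unfolding \<theta>_def using g(3) .
  ultimately show ?thesis by blast
qed

end



context falg begin

definition lideal :: "'a set \<Rightarrow> bool" where
  "lideal X \<longleftrightarrow> subspace X \<and> (\<forall>a x. x \<in> X \<longrightarrow> a * x \<in> X)"

definition spair :: "'a set \<Rightarrow> 'a set \<Rightarrow> bool" where
  "spair X Y \<longleftrightarrow> lideal X \<and> lideal Y \<and> Y \<subseteq> X \<and> Y \<noteq> X \<and>
     (\<forall>Z. lideal Z \<and> Y \<subseteq> Z \<and> Z \<subseteq> X \<longrightarrow> Z = Y \<or> Z = X)"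

definition Ann :: "'a set \<Rightarrow> 'a set \<Rightarrow> 'a set" where
  "Ann X Y = {a. \<forall>x\<in>X. a * x \<in> Y}"

lemma proj_ex:
  assumes Y: "subspace Y" and X: "subspace X" and YX: "Y \<subseteq> X"
  shows "\<exists>P W. (\<forall>x y. P (x + y) = P x + P y) \<and> (\<forall>c x. P (scale c x) = scale c (P x)) \<and>
    (\<forall>x. P x \<in> W) \<and> (\<forall>w\<in>W. P w = w) \<and> W \<subseteq> X \<and> (\<forall>y\<in>Y. P y = 0) \<and> (\<forall>x\<in>X. x - P x \<in> Y)"
proof -
  interpret vp: vector_space_pair scale scale by unfold_locales
  obtain BY where BY: "BY \<subseteq> Y" "independent BY" "Y \<subseteq> span BY"
    using maximal_independent_subset[of Y] by blast
  obtain BX where BX: "BY \<subseteq> BX" "BX \<subseteq> X" "independent BX" "X \<subseteq> span BX"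
    using maximal_independent_subset_extend[of BY X] BY YX by blast
  define f where "f b = (if b \<in> BY then 0 else b)" for b
  define P where "P = vp.construct BX f"
  define W where "W = span (BX - BY)"
  have lP: "Vector_Spaces.linear scale scale P" unfolding P_def by (rule vp.linear_construct[OF BX(3)])
  have Pb: "b \<in> BX \<Longrightarrow> P b = f b" for b unfolding P_def by (rule vp.construct_basis[OF BX(3)])
  have add: "P (x + y) = P x + P y" for x y using vp.linear_add[OF lP] .
  have sc: "P (scale c x) = scale c (P x)" for c x using vp.linear_scale[OF lP] .
  have PW: "P x \<in> W" for x
  proof -
    have "P x \<in> span (f ` BX)" unfolding P_def by (rule vp.construct_in_span[OF BX(3)])
    moreover have "f ` BX \<subseteq> insert 0 (BX - BY)" unfolding f_def by auto
    hence "span (f ` BX) \<subseteq> W" unfolding W_def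
      by (metis span_insert_0 span_mono)
    ultimately show ?thesis by blast
  qed
  have Pid: "P w = w" if w: "w \<in> W" for w
    using vp.linear_eq_on[OF lP linear_id, of w "BX - BY"] w Pb unfolding W_def f_def by (auto simp: id_def)
  have Pb0: "b \<in> BY \<Longrightarrow> P b = 0" for b using Pb BX(1) unfolding f_def by auto
  have P0: "P y = 0" if y: "y \<in> span BY" for y
    using vp.linear_eq_on[OF lP vp.module_hom_zero, of y BY] y Pb0 by auto
  have sBY: "span BY \<subseteq> Y" using BY(1) Y by (simp add: span_minimal)
  have WX: "W \<subseteq> X" unfolding W_def using BX(2) X by (metis Diff_subset span_minimal subset_trans)
  have dec: "x - P x \<in> Y" if x: "x \<in> X" for x
  proof -
    have "x \<in> span (BY \<union> (BX - BY))" using x BX(1,4) by (metis Un_Diff_cancel sup.absorb2 subsetD)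
    then obtain y w where yw: "x = y + w" "y \<in> span BY" "w \<in> span (BX - BY)"
      unfolding span_Un by blast
    have "P x = w" using yw add P0 Pid[of w] unfolding W_def by simp
    thus ?thesis using yw sBY by auto
  qed
  show ?thesis
    apply (rule exI[of _ P], rule exI[of _ W])
    using add sc PW Pid WX P0 sBY BY(3) dec by blast
qed

lemma lideal_UNIV: "lideal UNIV" by (simp add: lideal_def)
lemma lideal_0: "lideal {0}" by (simp add: lideal_def)

lemma theta_C:
  assumes add: "\<forall>x y. \<theta> (x + y) = \<theta> x + \<theta> y" and sc: "\<forall>c x. \<theta> (scale c x) = c * \<theta> x"
    and cm: "\<forall>x y. \<theta> (x * y) = \<theta> (y * x)" and z: "z \<in> C"
  shows "\<theta> z = (0::'f)"
proof -
  have sub: "subspace {z. \<theta> z = 0}"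
    unfolding subspace_def using add sc by (auto simp: )
     (metis add_cancel_right_right scale_zero_left)
  have "{x * y - y * x | x y. True} \<subseteq> {z. \<theta> z = 0}"
  proof
    fix u :: 'a assume "u \<in> {x * y - y * x | x y. True}"
    then obtain x y :: 'a where u: "u = x * y - y * x" by blast
    have "\<theta> (x * y - y * x) + \<theta> (y * x) = \<theta> (x * y)" using add by (metis diff_add_cancel)
    thus "u \<in> {z. \<theta> z = 0}" using u cm by simp
  qed
  hence "C \<subseteq> {z. \<theta> z = 0}" unfolding comm_span_def using sub by (rule span_minimal)
  thus ?thesis using z by blast
qed

lemma TR:
  assumes fin: "fin_dim_alg scale" and sp: "spair X Y"
    and hyp: "\<forall>x y. \<exists>c n. c \<in> C \<and> n \<in> Ann X Y \<and> x * a * y = c + n"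
    and x0: "x0 \<in> X"
  shows "a * x0 \<in> Y"
proof (rule ccontr)
  assume nY: "a * x0 \<notin> Y"
  have lX: "lideal X" and lY: "lideal Y" and YX: "Y \<subseteq> X" and mx: "\<And>Z. lideal Z \<Longrightarrow> Y \<subseteq> Z \<Longrightarrow> Z \<subseteq> X \<Longrightarrow> Z = Y \<or> Z = X"
    using sp unfolding spair_def by blast+
  have sX: "subspace X" and sY: "subspace Y" using lX lY unfolding lideal_def by auto
  have mX: "x \<in> X \<Longrightarrow> b * x \<in> X" for b x using lX unfolding lideal_def by auto
  have mY: "y \<in> Y \<Longrightarrow> b * y \<in> Y" for b y using lY unfolding lideal_def by auto
  obtain P W where PW: "\<forall>x y. P (x + y) = P x + P y" "\<forall>c x. P (scale c x) = scale c (P x)"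
    "\<forall>x. P x \<in> W" "\<forall>w\<in>W. P w = w" "W \<subseteq> X" "\<forall>y\<in>Y. P y = 0" "\<forall>x\<in>X. x - P x \<in> Y"
    using proj_ex[OF sY sX YX] by blast
  have Pdiff: "P (u - v) = P u - P v" for u v using PW(1) by (metis diff_add_cancel eq_diff_eq)
  have PY: "x \<in> X \<Longrightarrow> P x = 0 \<Longrightarrow> x \<in> Y" for x using PW(7) by fastforce
  have Pcomp: "P (b * P (c * w)) = P (b * c * w)" if w: "w \<in> W" for b c w
  proof -
    have "c * w \<in> X" using w PW(5) mX by auto
    hence "c * w - P (c * w) \<in> Y" using PW(7) by blast
    hence "b * (c * w - P (c * w)) \<in> Y" by (rule mY)
    hence "P (b * (c * w) - b * P (c * w)) = 0" using PW(6) by (simp add: right_diff_distrib)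
    thus ?thesis using Pdiff by (simp add: mult.assoc)
  qed
  have Ptrans: "\<exists>b. P (b * u) = w" if u: "u \<in> W" "u \<noteq> 0" and w: "w \<in> W" for u w
  proof -
    define Z where "Z = {y + b * u | y b. y \<in> Y}"
    have lZ: "lideal Z" unfolding lideal_def subspace_def Z_def
    proof (intro conjI allI impI ballI)
      show "0 \<in> {y + b * u |y b. y \<in> Y}" using subspace_0[OF sY] by (intro CollectI exI[of _ 0]) auto
    next
      fix p q assume "p \<in> {y + b * u |y b. y \<in> Y}" "q \<in> {y + b * u |y b. y \<in> Y}"
      then obtain y1 b1 y2 b2 where "p = y1 + b1 * u" "q = y2 + b2 * u" "y1 \<in> Y" "y2 \<in> Y" by blast
      thus "p + q \<in> {y + b * u |y b. y \<in> Y}"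
        by (intro CollectI exI[of _ "y1 + y2"] exI[of _ "b1 + b2"]) (auto simp: subspace_add[OF sY] algebra_simps)
    next
      fix c p assume "p \<in> {y + b * u |y b. y \<in> Y}"
      then obtain y1 b1 where "p = y1 + b1 * u" "y1 \<in> Y" by blast
      thus "scale c p \<in> {y + b * u |y b. y \<in> Y}"
        by (intro CollectI exI[of _ "scale c y1"] exI[of _ "scale c b1"])
           (auto simp: subspace_scale[OF sY] scale_right_distrib smult_left)
    next
      fix d p assume "p \<in> {y + b * u |y b. y \<in> Y}"
      then obtain y1 b1 where "p = y1 + b1 * u" "y1 \<in> Y" by blast
      thus "d * p \<in> {y + b * u |y b. y \<in> Y}"
        by (intro CollectI exI[of _ "d * y1"] exI[of _ "d * b1"]) (auto simp: mY distrib_left mult.assoc)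
    qed
    have uX: "u \<in> X" using u PW(5) by auto
    have "Y \<subseteq> Z"
    proof
      fix y assume "y \<in> Y"
      moreover have "y = y + 0 * u" by simp
      ultimately show "y \<in> Z" unfolding Z_def by blast
    qed
    moreover have "Z \<subseteq> X" unfolding Z_def using YX mX[OF uX] subspace_add[OF sX] by blast
    moreover have "u \<in> Z"
    proof -
      have "u = 0 + 1 * u" by simp
      thus ?thesis unfolding Z_def using subspace_0[OF sY] by blast
    qed
    moreover have "u \<notin> Y" using u PW(4,6) by auto
    ultimately have "Z = X" using mx[OF lZ] by blast
    hence "w \<in> Z" using w PW(5) by auto
    then obtain y b where "w = y + b * u" "y \<in> Y" unfolding Z_def by blast
    hence "P w = P (b * u)" using PW(1,6) by simp
    thus ?thesis using PW(4) w by auto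
  qed
  define v0 where "v0 = P x0"
  have v0W: "v0 \<in> W" using PW(3) v0_def by simp
  have av0: "P (a * v0) \<noteq> 0"
  proof
    assume "P (a * v0) = 0"
    moreover have "a * v0 \<in> X" using v0W PW(5) mX by auto
    ultimately have "a * v0 \<in> Y" using PY by blast
    moreover have "a * (x0 - v0) \<in> Y" using PW(7) x0 mY v0_def by blast
    ultimately have "a * (x0 - v0) + a * v0 \<in> Y" using subspace_add[OF sY] by blast
    thus False using nY by (simp add: algebra_simps)
  qed
  have Wnz: "W \<noteq> {0}"
  proof
    assume "W = {0}" hence "v0 = 0" using v0W by auto
    thus False using av0 PW(1) by (metis add_cancel_right_right mult_zero_right)
  qed
  have ir: "irrep scale P W"
    unfolding irrep_def irrep_axioms_def
    using falg_axioms PW(1,2,3,4) Pcomp Ptrans Wnz fin by blast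
  obtain \<theta> where th: "\<forall>x y. \<theta> (x + y) = \<theta> x + \<theta> y" "\<forall>c x. \<theta> (scale c x) = c * \<theta> x"
    "\<forall>x y. \<theta> (x * y) = \<theta> (y * x)" "\<forall>n. (\<forall>w\<in>W. P (n * w) = 0) \<longrightarrow> \<theta> n = 0"
    "\<exists>x y. \<theta> (x * a * y) \<noteq> 0"
    using irrep.main_irrep[OF ir v0W av0] by blast
  obtain x y where xy: "\<theta> (x * a * y) \<noteq> 0" using th(5) by blast
  obtain c n where cn: "c \<in> C" "n \<in> Ann X Y" "x * a * y = c + n" using hyp by blast
  have "\<theta> c = 0" using theta_C[OF th(1,2,3) cn(1)] .
  moreover have "\<theta> n = 0"
  proof -
    have "\<forall>w\<in>W. P (n * w) = 0" using cn(2) PW(5,6) unfolding Ann_def by auto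
    thus ?thesis using th(4) by blast
  qed
  ultimately show False using xy cn(3) th(1) by simp
qed

end



context falg begin

lemma fd_ex: assumes "fin_dim_alg scale" shows "\<exists>B. finite_dimensional_vector_space scale B"
proof -
  obtain B0 where B0: "finite B0" "span B0 = UNIV" using assms unfolding fin_dim_alg_def by blast
  obtain B where B: "B \<subseteq> B0" "independent B" "B0 \<subseteq> span B"
    using maximal_independent_subset[of B0] by blast
  have "span B = UNIV" using B(3) B0(2) by (metis span_mono span_span top.extremum_uniqueI)
  moreover have "finite B" using B(1) B0(1) finite_subset by blast
  ultimately have "finite_dimensional_vector_space scale B"
    using B(2) by unfold_locales auto
  thus ?thesis by blast
qed

definition R0 :: "'a set" where
  "R0 = {a. \<forall>X Y. spair X Y \<longrightarrow> (\<forall>x\<in>X. a * x \<in> Y)}"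

lemma lideal_sub: "lideal X \<Longrightarrow> subspace X" by (simp add: lideal_def)
lemma lideal_mult: "lideal X \<Longrightarrow> x \<in> X \<Longrightarrow> a * x \<in> X" by (simp add: lideal_def)

lemma R0_ideal: "alg_ideal scale R0"
  unfolding alg_ideal_def
proof (intro conjI allI impI)
  show "subspace R0" unfolding subspace_def R0_def
  proof (intro conjI allI ballI impI CollectI)
    fix X Y x assume "spair X Y" "x \<in> X"
    thus "0 * x \<in> Y" using subspace_0[OF lideal_sub] unfolding spair_def by auto
  next
    fix p q X Y x assume p: "p \<in> {a. \<forall>X Y. spair X Y \<longrightarrow> (\<forall>x\<in>X. a * x \<in> Y)}"
      and q: "q \<in> {a. \<forall>X Y. spair X Y \<longrightarrow> (\<forall>x\<in>X. a * x \<in> Y)}" and s: "spair X Y" and x: "x \<in> X"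
    have "p * x \<in> Y" "q * x \<in> Y" using p q s x by auto
    thus "(p + q) * x \<in> Y" using s subspace_add[OF lideal_sub] unfolding spair_def by (auto simp: distrib_right)
  next
    fix c p X Y x assume p: "p \<in> {a. \<forall>X Y. spair X Y \<longrightarrow> (\<forall>x\<in>X. a * x \<in> Y)}"
      and s: "spair X Y" and x: "x \<in> X"
    have "p * x \<in> Y" using p s x by auto
    thus "scale c p * x \<in> Y" using s subspace_scale[OF lideal_sub] unfolding spair_def by (auto simp: smult_left)
  qed
next
  fix a x assume x: "x \<in> R0"
  show "a * x \<in> R0" unfolding R0_def
  proof (intro CollectI allI impI ballI)
    fix X Y z assume s: "spair X Y" and z: "z \<in> X"
    have "x * z \<in> Y" using x s z unfolding R0_def by auto
    thus "a * x * z \<in> Y" using s lideal_mult unfolding spair_def by (auto simp: mult.assoc)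
  qed
  show "x * a \<in> R0" unfolding R0_def
  proof (intro CollectI allI impI ballI)
    fix X Y z assume s: "spair X Y" and z: "z \<in> X"
    have "a * z \<in> X" using s z lideal_mult unfolding spair_def by auto
    hence "x * (a * z) \<in> Y" using x s unfolding R0_def by auto
    thus "x * a * z \<in> Y" by (simp add: mult.assoc)
  qed
qed

lemma maxsub_ex:
  assumes fin: "fin_dim_alg scale" and X: "lideal X" and nz: "X \<noteq> {0}"
  shows "\<exists>Y. spair X Y"
proof -
  obtain B where "finite_dimensional_vector_space scale B" using fd_ex[OF fin] by blast
  then interpret fd: finite_dimensional_vector_space scale B .
  let ?Q = "\<lambda>m. \<exists>Z. lideal Z \<and> Z \<subseteq> X \<and> Z \<noteq> X \<and> dim Z = m"
  have q0: "?Q (dim {0::'a})" using lideal_0 nz X subspace_0[OF lideal_sub[OF X]] by blast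
  have bd: "\<forall>m. ?Q m \<longrightarrow> m \<le> dim X" using fd.dim_subset by blast
  obtain m where m: "?Q m" and mmax: "\<forall>k. ?Q k \<longrightarrow> k \<le> m"
    using Nat.ex_has_greatest_nat[OF q0 bd] by blast
  obtain Y where Y: "lideal Y" "Y \<subseteq> X" "Y \<noteq> X" "dim Y = m" using m by blast
  have "spair X Y" unfolding spair_def
  proof (intro conjI allI impI X Y(1,2,3))
    fix Z assume Z: "lideal Z \<and> Y \<subseteq> Z \<and> Z \<subseteq> X"
    show "Z = Y \<or> Z = X"
    proof (rule ccontr)
      assume "\<not> (Z = Y \<or> Z = X)"
      hence ne: "Z \<noteq> Y" "Z \<noteq> X" by auto
      have sy: "span Y = Y" using Y(1) lideal_sub span_eq_iff by blast
      have sz: "span Z = Z" using Z lideal_sub span_eq_iff by blast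
      have "span Y \<subset> span Z" unfolding sy sz using Z ne by blast
      hence "dim Y < dim Z" by (rule fd.dim_psubset)
      moreover have "dim Z \<le> m" using mmax Z ne by blast
      ultimately show False using Y(4) by simp
    qed
  qed
  thus ?thesis by blast
qed

lemma R0_nil:
  assumes fin: "fin_dim_alg scale"
  shows "\<exists>n>0. \<forall>xs. length xs = n \<and> set xs \<subseteq> R0 \<longrightarrow> prod_list xs = 0"
proof -
  obtain B where "finite_dimensional_vector_space scale B" using fd_ex[OF fin] by blast
  then interpret fd: finite_dimensional_vector_space scale B .
  have claim: "\<forall>X. lideal X \<longrightarrow> dim X \<le> k \<longrightarrow> (\<forall>xs. length xs = k \<and> set xs \<subseteq> R0 \<longrightarrow> (\<forall>x\<in>X. prod_list xs * x = 0))" for k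
  proof (induct k)
    case 0
    show ?case
    proof (intro allI impI ballI)
      fix X xs x assume "lideal X" "dim X \<le> 0" "length xs = 0 \<and> set xs \<subseteq> R0" "x \<in> X"
      thus "prod_list xs * x = 0" by auto
    qed
  next
    case (Suc k)
    show ?case
    proof (intro allI impI ballI)
      fix X xs x assume X: "lideal X" and dX: "dim X \<le> Suc k" and xs: "length xs = Suc k \<and> set xs \<subseteq> R0"
        and x: "x \<in> X"
      show "prod_list xs * x = 0"
      proof (cases "X = {0}")
        case True thus ?thesis using x by simp
      next
        case False
        obtain Y where Y: "spair X Y" using maxsub_ex[OF fin X False] by blast
        obtain zs z where xz: "xs = zs @ [z]" using xs by (metis length_Suc_conv_rev)
        have z: "z \<in> R0" and zs: "set zs \<subseteq> R0" "length zs = k" using xs xz by auto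
        have zx: "z * x \<in> Y" using z Y x unfolding R0_def by blast
        have lY: "lideal Y" and YX: "Y \<subseteq> X" "Y \<noteq> X" using Y unfolding spair_def by auto
        have sy: "span Y = Y" using lY lideal_sub span_eq_iff by blast
        have sx: "span X = X" using X lideal_sub span_eq_iff by blast
        have "span Y \<subset> span X" unfolding sy sx using YX by blast
        hence "dim Y < dim X" by (rule fd.dim_psubset)
        hence "dim Y \<le> k" using dX by simp
        hence "prod_list zs * (z * x) = 0" using Suc lY zs zx by blast
        thus ?thesis using xz by (simp add: mult.assoc)
      qed
    qed
  qed
  let ?n = "dim (UNIV :: 'a set)"
  have n0: "?n > 0"
  proof (rule ccontr)
    assume "\<not> ?n > 0" hence "?n = 0" by simp
    hence "(UNIV::'a set) \<subseteq> {0}" by (rule fd.dim_eq_0[THEN iffD1])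
    hence "(1::'a) = 0" by blast
    thus False by simp
  qed
  have "\<forall>xs. length xs = ?n \<and> set xs \<subseteq> R0 \<longrightarrow> prod_list xs = 0"
    using claim[of ?n] lideal_UNIV by (metis UNIV_I mult.right_neutral order_refl)
  with n0 show ?thesis by blast
qed

lemma R0_nilpotent: "fin_dim_alg scale \<Longrightarrow> nilpotent_ideal scale R0"
  unfolding nilpotent_ideal_def using R0_ideal R0_nil by blast

lemma nil_sub_R0:
  assumes I: "nilpotent_ideal scale I"
  shows "I \<subseteq> R0"
proof
  fix i assume i: "i \<in> I"
  obtain n where n: "n > 0" "\<forall>xs. length xs = n \<and> set xs \<subseteq> I \<longrightarrow> prod_list xs = 0"
    using I unfolding nilpotent_ideal_def by blast
  have Iid: "alg_ideal scale I" using I unfolding nilpotent_ideal_def by blast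
  have Isub: "subspace I" and Im: "\<And>a x. x \<in> I \<Longrightarrow> a * x \<in> I \<and> x * a \<in> I"
    using Iid unfolding alg_ideal_def by auto
  show "i \<in> R0" unfolding R0_def
  proof (intro CollectI allI impI ballI)
    fix X Y x assume s: "spair X Y" and x: "x \<in> X"
    have lX: "lideal X" and lY: "lideal Y" and YX: "Y \<subseteq> X" "Y \<noteq> X"
      and mx: "\<And>Z. lideal Z \<Longrightarrow> Y \<subseteq> Z \<Longrightarrow> Z \<subseteq> X \<Longrightarrow> Z = Y \<or> Z = X"
      using s unfolding spair_def by blast+
    define Z where "Z = {x \<in> X. \<forall>j\<in>I. j * x \<in> Y}"
    have lZ: "lideal Z" unfolding lideal_def subspace_def Z_def
    proof (intro conjI allI impI ballI CollectI)
      show "0 \<in> X" using subspace_0[OF lideal_sub[OF lX]] .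
      fix j assume "j \<in> I" show "j * 0 \<in> Y" using subspace_0[OF lideal_sub[OF lY]] by simp
    next
      fix p q assume p: "p \<in> {x \<in> X. \<forall>j\<in>I. j * x \<in> Y}" and q: "q \<in> {x \<in> X. \<forall>j\<in>I. j * x \<in> Y}"
      thus "p + q \<in> X" using subspace_add[OF lideal_sub[OF lX]] by auto
      fix j assume "j \<in> I" thus "j * (p + q) \<in> Y" using p q subspace_add[OF lideal_sub[OF lY]]
        by (auto simp: distrib_left)
    next
      fix c p assume p: "p \<in> {x \<in> X. \<forall>j\<in>I. j * x \<in> Y}"
      thus "scale c p \<in> X" using subspace_scale[OF lideal_sub[OF lX]] by auto
      fix j assume "j \<in> I" thus "j * scale c p \<in> Y" using p subspace_scale[OF lideal_sub[OF lY]]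
        by (auto simp: smult_right)
    next
      fix a p assume p: "p \<in> {x \<in> X. \<forall>j\<in>I. j * x \<in> Y}"
      thus "a * p \<in> X" using lideal_mult[OF lX] by auto
      fix j assume "j \<in> I" hence "j * a \<in> I" using Im by blast
      thus "j * (a * p) \<in> Y" using p by (auto simp: mult.assoc[symmetric])
    qed
    have "Y \<subseteq> Z" unfolding Z_def using YX(1) lideal_mult[OF lY] by auto
    moreover have "Z \<subseteq> X" unfolding Z_def by auto
    ultimately have "Z = Y \<or> Z = X" using mx[OF lZ] by blast
    moreover have "Z \<noteq> Y"
    proof
      assume ZY: "Z = Y"
      obtain x0 where x0: "x0 \<in> X" "x0 \<notin> Y" using YX by blast
      have "\<exists>xs. length xs = k \<and> set xs \<subseteq> I \<and> prod_list xs * x0 \<in> X \<and> prod_list xs * x0 \<notin> Y" for k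
      proof (induct k)
        case 0 show ?case using x0 by (intro exI[of _ "[]"]) auto
      next
        case (Suc k)
        then obtain xs where xs: "length xs = k" "set xs \<subseteq> I" "prod_list xs * x0 \<in> X" "prod_list xs * x0 \<notin> Y"
          by blast
        have "prod_list xs * x0 \<notin> Z" using xs ZY by simp
        then obtain j where j: "j \<in> I" "j * (prod_list xs * x0) \<notin> Y" using xs(3) unfolding Z_def by blast
        have "j * (prod_list xs * x0) \<in> X" using lideal_mult[OF lX xs(3)] .
        thus ?case using xs j by (intro exI[of _ "j # xs"]) (auto simp: mult.assoc)
      qed
      then obtain xs where "length xs = n" "set xs \<subseteq> I" "prod_list xs * x0 \<notin> Y" by blast
      hence "0 \<notin> Y" using n(2) by auto
      thus False using subspace_0[OF lideal_sub[OF lY]] by blast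
    qed
    ultimately have "Z = X" by blast
    thus "i * x \<in> Y" using x i unfolding Z_def by blast
  qed
qed

lemma rad_eq: "fin_dim_alg scale \<Longrightarrow> alg_rad scale = R0"
  unfolding alg_rad_def
proof (rule the_equality)
  assume "fin_dim_alg scale"
  thus "nilpotent_ideal scale R0 \<and> (\<forall>I. nilpotent_ideal scale I \<longrightarrow> I \<subseteq> R0)"
    using R0_nilpotent nil_sub_R0 by blast
next
  fix R assume f: "fin_dim_alg scale" and R: "nilpotent_ideal scale R \<and> (\<forall>I. nilpotent_ideal scale I \<longrightarrow> I \<subseteq> R)"
  thus "R = R0" using R0_nilpotent[OF f] nil_sub_R0 by blast
qed

end



context falg begin

lemma LIN:
  assumes S: "subspace S" and CS: "C \<subseteq> S" and c2: "(2::'f) \<noteq> 0"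
    and sq: "\<forall>s. s ^ 2 * b \<in> S"
  shows "x * b * y \<in> S"
proof -
  have xb: "z * b \<in> S" for z
  proof -
    have "(z + 1) ^ 2 * b - z ^ 2 * b - 1 ^ 2 * b \<in> S"
      using sq subspace_diff[OF S] by blast
    moreover have "(z + 1) ^ 2 * b - z ^ 2 * b - 1 ^ 2 * b = scale 2 (z * b)"
      using scale_of_nat[of 2 "z * b"] by (simp add: power2_eq_square algebra_simps mult_2)
    ultimately show ?thesis using div_in[OF c2 S] by simp
  qed
  have "x * b * y - y * (x * b) \<in> S" using comm_in_C CS by blast
  moreover have "y * (x * b) \<in> S" using xb[of "y * x"] by (simp add: mult.assoc)
  ultimately have "x * b * y - y * (x * b) + y * (x * b) \<in> S" using subspace_add[OF S] by blast
  thus ?thesis by simp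
qed

lemma maxlideal_ex:
  assumes fin: "fin_dim_alg scale" and M: "alg_ideal scale M" "M \<noteq> UNIV"
  shows "\<exists>N. lideal N \<and> M \<subseteq> N \<and> spair UNIV N"
proof -
  obtain B where "finite_dimensional_vector_space scale B" using fd_ex[OF fin] by blast
  then interpret fd: finite_dimensional_vector_space scale B .
  have lM: "lideal M" using M unfolding alg_ideal_def lideal_def by auto
  let ?Q = "\<lambda>m. \<exists>Z. lideal Z \<and> M \<subseteq> Z \<and> Z \<noteq> UNIV \<and> dim Z = m"
  have q0: "?Q (dim M)" using lM M(2) by blast
  have bd: "\<forall>m. ?Q m \<longrightarrow> m \<le> dim (UNIV::'a set)" using fd.dim_subset by blast
  obtain m where m: "?Q m" and mmax: "\<forall>k. ?Q k \<longrightarrow> k \<le> m"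
    using Nat.ex_has_greatest_nat[OF q0 bd] by blast
  obtain N where N: "lideal N" "M \<subseteq> N" "N \<noteq> UNIV" "dim N = m" using m by blast
  have "spair UNIV N" unfolding spair_def
  proof (intro conjI allI impI lideal_UNIV N(1) subset_UNIV N(3))
    fix Z assume Z: "lideal Z \<and> N \<subseteq> Z \<and> Z \<subseteq> UNIV"
    show "Z = N \<or> Z = UNIV"
    proof (rule ccontr)
      assume "\<not> (Z = N \<or> Z = UNIV)"
      hence ne: "Z \<noteq> N" "Z \<noteq> UNIV" by auto
      have sy: "span N = N" using N(1) lideal_sub span_eq_iff by blast
      have sz: "span Z = Z" using Z lideal_sub span_eq_iff by blast
      have "span N \<subset> span Z" unfolding sy sz using Z ne by blast
      hence "dim N < dim Z" by (rule fd.dim_psubset)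
      moreover have "dim Z \<le> m" using mmax Z ne N(2) by blast
      ultimately show False using N(4) by simp
    qed
  qed
  thus ?thesis using N by blast
qed

end

theorem lemma3p2:
  fixes scale :: "'f::field \<Rightarrow> 'a::ring_1 \<Rightarrow> 'a"
    and T :: "'a \<Rightarrow> 'a"
  assumes alg: "algebra_over scale"
    and char2: "(2::'f) \<noteq> 0" and char3: "(3::'f) \<noteq> 0"
    and lin: "Vector_Spaces.linear scale scale T"
    and cube: "\<forall>x. T x ^ 3 - x ^ 3 \<in> comm_span scale"
  shows "(\<forall>x y. T x ^ 2 * T y - x ^ 2 * y \<in> comm_span scale)
    \<and> ((fin_dim_alg scale \<and> {x. T x = 0} \<inter> alg_rad scale = {0}) \<longrightarrow>
        (bij T \<and> (\<forall>M. maximal_alg_ideal scale M \<longrightarrow> T ` M \<subseteq> M)))"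
proof -
  interpret falg scale by (unfold_locales) (rule alg)
  interpret Tl: Vector_Spaces.linear scale scale T by (rule lin)
  have P1: "\<forall>x y. T x ^ 2 * T y - x ^ 2 * y \<in> C"
    using part1[OF char2 char3 lin cube] by blast
  have P2: "bij T \<and> (\<forall>M. maximal_alg_ideal scale M \<longrightarrow> T ` M \<subseteq> M)"
    if fin: "fin_dim_alg scale" and kr: "{x. T x = 0} \<inter> alg_rad scale = {0}"
  proof -
    have rad: "alg_rad scale = R0" by (rule rad_eq[OF fin])
    have ker: "a = 0" if Ta: "T a = 0" for a
    proof -
      have "\<forall>s. s ^ 2 * a \<in> C"
      proof
        fix s
        have "T s ^ 2 * T a - s ^ 2 * a \<in> C" using P1 by blast
        hence "- (s ^ 2 * a) \<in> C" using Ta by simp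
        thus "s ^ 2 * a \<in> C" using subspace_neg[OF C_sub] by fastforce
      qed
      hence xa: "x * a * y \<in> C" for x y using LIN[OF C_sub _ char2] by blast
      have "a \<in> R0" unfolding R0_def
      proof (intro CollectI allI impI ballI)
        fix X Y x assume s: "spair X Y" and x: "x \<in> X"
        have "0 \<in> Ann X Y" unfolding Ann_def using s subspace_0[OF lideal_sub] unfolding spair_def by auto
        hence "\<forall>x y. \<exists>c n. c \<in> C \<and> n \<in> Ann X Y \<and> x * a * y = c + n"
          using xa by (metis add.right_neutral)
        thus "a * x \<in> Y" using TR[OF fin s _ x] by blast
      qed
      hence "a \<in> {x. T x = 0} \<inter> alg_rad scale" using Ta rad by simp
      thus "a = 0" using kr by blast
    qed
    have inj: "inj T"
    proof (rule injI)
      fix x y assume "T x = T y"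
      hence "T (x - y) = 0" by (simp add: Tl.diff)
      thus "x = y" using ker[of "x - y"] by simp
    qed
    obtain B where "finite_dimensional_vector_space scale B" using fd_ex[OF fin] by blast
    then interpret fd: finite_dimensional_vector_space scale B .
    have surj: "surj T" by (rule fd.linear_inj_imp_surj[OF lin inj])
    have "T ` M \<subseteq> M" if MM: "maximal_alg_ideal scale M" for M
    proof
      fix t assume "t \<in> T ` M"
      then obtain m where m: "m \<in> M" "t = T m" by blast
      have Mi: "alg_ideal scale M" and MU: "M \<noteq> UNIV"
        and Mmax: "\<And>J. alg_ideal scale J \<Longrightarrow> M \<subseteq> J \<Longrightarrow> J = M \<or> J = UNIV"
        using MM unfolding maximal_alg_ideal_def by blast+
      have Msub: "subspace M" and Mm: "\<And>a x. x \<in> M \<Longrightarrow> a * x \<in> M \<and> x * a \<in> M"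
        using Mi unfolding alg_ideal_def by auto
      obtain N where N: "lideal N" "M \<subseteq> N" "spair UNIV N" using maxlideal_ex[OF fin Mi MU] by blast
      have NU: "N \<noteq> UNIV" using N(3) unfolding spair_def by auto
      have Ai: "alg_ideal scale (Ann UNIV N)"
        unfolding alg_ideal_def Ann_def subspace_def
        using subspace_0[OF lideal_sub[OF N(1)]] subspace_add[OF lideal_sub[OF N(1)]]
          subspace_scale[OF lideal_sub[OF N(1)]] lideal_mult[OF N(1)]
        by (auto simp: distrib_right smult_left mult.assoc)
      have MA: "M \<subseteq> Ann UNIV N" unfolding Ann_def using Mm N(2) by blast
      have "Ann UNIV N \<noteq> UNIV"
      proof
        assume "Ann UNIV N = UNIV"
        hence "\<forall>x. 1 * x \<in> N" unfolding Ann_def by blast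
        thus False using NU by auto
      qed
      hence AM: "Ann UNIV N = M" using Mmax[OF Ai MA] by blast
      define S where "S = {c + n | c n. c \<in> C \<and> n \<in> M}"
      have Ssub: "subspace S" unfolding S_def by (rule subspace_sums[OF C_sub Msub])
      have CS: "C \<subseteq> S" unfolding S_def using subspace_0[OF Msub] by force
      have "\<forall>s. s ^ 2 * T m \<in> S"
      proof
        fix s obtain u where u: "s = T u" using surj by (metis surjD)
        have "T u ^ 2 * T m - u ^ 2 * m \<in> C" using P1 by blast
        moreover have "u ^ 2 * m \<in> M" using Mm m(1) by blast
        moreover have "s ^ 2 * T m = (T u ^ 2 * T m - u ^ 2 * m) + u ^ 2 * m" using u by simp
        ultimately show "s ^ 2 * T m \<in> S" unfolding S_def by blast
      qed
      hence "\<forall>x y. x * T m * y \<in> S" using LIN[OF Ssub CS char2] by blast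
      hence hyp: "\<forall>x y. \<exists>c n. c \<in> C \<and> n \<in> Ann UNIV N \<and> x * T m * y = c + n"
        unfolding S_def AM by blast
      have "\<forall>x. T m * x \<in> N" using TR[OF fin N(3) hyp] by blast
      hence "T m \<in> Ann UNIV N" unfolding Ann_def by blast
      thus "t \<in> M" using AM m(2) by simp
    qed
    thus ?thesis using inj surj bij_def by blast
  qed
  show ?thesis using P1 P2 by blast
qed


end
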